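(* Let $k$ be an infinite field of characteristic $0$. (i) If $W_1=W(X_1,Y_1),W_2=W(X_2,Y_2)\in\Xi'$, $H\in\Xi$ and $(T_1,T_2)\in Cl_H(W_2)$, then $\mathcal{F}(\beta_{W_1,W_2}(T_1,T_2))=\beta_{\mathcal{F}(W_1),\mathcal{F}(W_2)}(T_1\oplus T_2)$. (ii) If $F_1=F(M_1),F_2=F(M_2)\in\mathrm{Ob}\,\Theta^0$, $(N,p)\in\Theta$ and $T\in Cl_N(F_2)$, then $\mathcal{F}^{-1}(\beta_{F_1,F_2}(T))=\beta_{\mathcal{F}^{-1}(F_1),\mathcal{F}^{-1}(F_2)}(T\cap\ker p,\,T\cap\mathrm{im}\,p)$, where $p$ here denotes the projection of $F_2$.
   Context: Representations $(L,V)$ (Lie algebra $L$ over $k$, $L$-module $V$) with homomorphisms $(\varphi,\psi)$ ($\varphi$ Lie homomorphism, $\psi$ linear, $\varphi(l)\circ\psi(v)=\psi(l\circ v)$) form $\Xi$. $W(X,Y)=(L(X),A(X)Y)$ is the free representation; $\Xi'$ is the set of $W(X,Y)$ with $X,Y$ finite subsets of fixed countable sets and $|X|=|Y|$. A Lie algebra with projection-derivation is a Lie algebra $M$ with linear $p$, $p^2=p$, $p[m_1,m_2]=[pm_1,m_2]+[m_1,pm_2]$; these form the variety $\Theta$, and $\Theta^0$ consists of its free algebras on finite subsets of a fixed countable set. The functor $\mathcal{F}$ sends $(L,V)$ to $(L\oplus V,p_V)$ ($[l_1+v_1,l_2+v_2]=[l_1,l_2]+l_1\circ v_2-l_2\circ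 v_1$, $p_V(l+v)=v$) and $(\varphi,\psi)$ to $\varphi\oplus\psi$; $\mathcal{F}^{-1}$ sends $(M,p)$ to $(\ker p,\mathrm{im}\,p)$ ($l\circ v=[l,v]$) and $f:(M_1,p_1)\to(M_2,p_2)$ to $(r_2f\kappa_1,p_2f\iota_1)$ with $r_2=\mathrm{id}-p_2$ and $\kappa_1,\iota_1$ inclusions; both are applied to pairs of morphisms componentwise. Closedness: for an algebra $H$, a free object $W$ and a subset $T$ of $W$ (a pair of subsets of the two sorts for representations), $T'_H$ is the set of homomorphisms $W\to H$ whose kernel contains $T$ (sortwise), $T''_H$ the (sortwise) intersection of their kernels, $T$ is $H$-closed if $T''_H=T$, and $Cl_H(W)$ is the set of $H$-closed subsets. For free objects $W_1,W_2$ and a congruence $T$ of $W_2$, $\beta_{W_1,W_2}(T)$ is the relation on $\mathrm{Hom}(W_1,W_2)$: two homomorphisms are related iff their values at every element of $W_1$ are congruent modulo $T$ (for representations: sortwise, the Lie parts modulo $T_1$ on $L(X_1)$ and the module parts modulo $T_2$ on $A(X_1)Y_1$). *)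

theory Defs
  imports Main "HOL-Library.FuncSet"
begin

record ('k,'a) vs =
  car :: "'a set"
  zer :: 'a
  add :: "'a \<Rightarrow> 'a \<Rightarrow> 'a"
  sm  :: "'k \<Rightarrow> 'a \<Rightarrow> 'a"

record ('k,'a) lie = "('k,'a) vs" +
  br :: "'a \<Rightarrow> 'a \<Rightarrow> 'a"

definition sub :: "('k::field,'a,'m) vs_scheme \<Rightarrow> 'a \<Rightarrow> 'a \<Rightarrow> 'a" where
  "sub V a b = add V a (sm V (-1) b)"

definition vspace :: "('k::field,'a,'m) vs_scheme \<Rightarrow> bool" where
  "vspace V \<longleftrightarrow>
     zer V \<in> car V
   \<and> (\<forall>a\<in>car V. \<forall>b\<in>car V. add V a b \<in> car V)
   \<and> (\<forall>c. \<forall>a\<in>car V. sm V c a \<in> car V)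
   \<and> (\<forall>a\<in>car V. \<forall>b\<in>car V. \<forall>c\<in>car V. add V (add V a b) c = add V a (add V b c))
   \<and> (\<forall>a\<in>car V. \<forall>b\<in>car V. add V a b = add V b a)
   \<and> (\<forall>a\<in>car V. add V a (zer V) = a)
   \<and> (\<forall>a\<in>car V. add V a (sm V (-1) a) = zer V)
   \<and> (\<forall>c. \<forall>a\<in>car V. \<forall>b\<in>car V. sm V c (add V a b) = add V (sm V c a) (sm V c b))
   \<and> (\<forall>c d. \<forall>a\<in>car V. sm V (c + d) a = add V (sm V c a) (sm V d a))
   \<and> (\<forall>c d. \<forall>a\<in>car V. sm V (c * d) a = sm V c (sm V d a))
   \<and> (\<forall>a\<in>car V. sm V 1 a = a)"

text \<open>Linear maps; maps are extensional (undefined off the carrier), so that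
  sets of homomorphisms consist of canonical representatives.\<close>
definition linmap :: "('k::field,'a,'m) vs_scheme \<Rightarrow> ('k,'b,'n) vs_scheme \<Rightarrow> ('a \<Rightarrow> 'b) \<Rightarrow> bool" where
  "linmap V W f \<longleftrightarrow> f \<in> car V \<rightarrow>\<^sub>E car W
     \<and> (\<forall>a\<in>car V. \<forall>b\<in>car V. f (add V a b) = add W (f a) (f b))
     \<and> (\<forall>c. \<forall>a\<in>car V. f (sm V c a) = sm W c (f a))"

definition lie_alg :: "('k::field,'a,'m) lie_scheme \<Rightarrow> bool" where
  "lie_alg L \<longleftrightarrow> vspace L
   \<and> (\<forall>a\<in>car L. \<forall>b\<in>car L. br L a b \<in> car L)
   \<and> (\<forall>a\<in>car L. \<forall>b\<in>car L. \<forall>c\<in>car L. br L (add L a b) c = add L (br L a c) (br L b c))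
   \<and> (\<forall>a\<in>car L. \<forall>b\<in>car L. \<forall>c\<in>car L. br L a (add L b c) = add L (br L a b) (br L a c))
   \<and> (\<forall>k. \<forall>a\<in>car L. \<forall>b\<in>car L. br L (sm L k a) b = sm L k (br L a b))
   \<and> (\<forall>k. \<forall>a\<in>car L. \<forall>b\<in>car L. br L a (sm L k b) = sm L k (br L a b))
   \<and> (\<forall>a\<in>car L. br L a a = zer L)
   \<and> (\<forall>a\<in>car L. \<forall>b\<in>car L. \<forall>c\<in>car L.
        add L (add L (br L a (br L b c)) (br L b (br L c a))) (br L c (br L a b)) = zer L)"

definition lie_hom :: "('k::field,'a,'m) lie_scheme \<Rightarrow> ('k,'b,'n) lie_scheme \<Rightarrow> ('a \<Rightarrow> 'b) \<Rightarrow> bool" where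
  "lie_hom L M f \<longleftrightarrow> linmap L M f \<and> (\<forall>a\<in>car L. \<forall>b\<in>car L. f (br L a b) = br M (f a) (f b))"

record ('k,'a,'b) rep =
  rL :: "('k,'a) lie"
  rV :: "('k,'b) vs"
  act :: "'a \<Rightarrow> 'b \<Rightarrow> 'b"

definition is_rep :: "('k::field,'a,'b) rep \<Rightarrow> bool" where
  "is_rep R \<longleftrightarrow> lie_alg (rL R) \<and> vspace (rV R)
   \<and> (\<forall>l\<in>car (rL R). \<forall>v\<in>car (rV R). act R l v \<in> car (rV R))
   \<and> (\<forall>l1\<in>car (rL R). \<forall>l2\<in>car (rL R). \<forall>v\<in>car (rV R).
        act R (add (rL R) l1 l2) v = add (rV R) (act R l1 v) (act R l2 v))
   \<and> (\<forall>c. \<forall>l\<in>car (rL R). \<forall>v\<in>car (rV R). act R (sm (rL R) c l) v = sm (rV R) c (act R l v))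
   \<and> (\<forall>l\<in>car (rL R). \<forall>u\<in>car (rV R). \<forall>v\<in>car (rV R).
        act R l (add (rV R) u v) = add (rV R) (act R l u) (act R l v))
   \<and> (\<forall>c. \<forall>l\<in>car (rL R). \<forall>v\<in>car (rV R). act R l (sm (rV R) c v) = sm (rV R) c (act R l v))
   \<and> (\<forall>l1\<in>car (rL R). \<forall>l2\<in>car (rL R). \<forall>v\<in>car (rV R).
        act R (br (rL R) l1 l2) v = sub (rV R) (act R l1 (act R l2 v)) (act R l2 (act R l1 v)))"

definition rep_hom :: "('k::field,'a,'b) rep \<Rightarrow> ('k,'c,'d) rep \<Rightarrow> (('a \<Rightarrow> 'c) \<times> ('b \<Rightarrow> 'd)) set" where
  "rep_hom R1 R2 = {(\<phi>,\<psi>). lie_hom (rL R1) (rL R2) \<phi> \<and> linmap (rV R1) (rV R2) \<psi>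
      \<and> (\<forall>l\<in>car (rL R1). \<forall>v\<in>car (rV R1). act R2 (\<phi> l) (\<psi> v) = \<psi> (act R1 l v))}"

section \<open>Lie algebras with projection-derivation (variety Theta)\<close>

record ('k,'c) lpd =
  pM :: "('k,'c) lie"
  prj :: "'c \<Rightarrow> 'c"

definition is_lpd :: "('k::field,'c) lpd \<Rightarrow> bool" where
  "is_lpd A \<longleftrightarrow> lie_alg (pM A)
   \<and> (\<forall>a\<in>car (pM A). prj A a \<in> car (pM A))
   \<and> (\<forall>a\<in>car (pM A). \<forall>b\<in>car (pM A). prj A (add (pM A) a b) = add (pM A) (prj A a) (prj A b))
   \<and> (\<forall>c. \<forall>a\<in>car (pM A). prj A (sm (pM A) c a) = sm (pM A) c (prj A a))
   \<and> (\<forall>a\<in>car (pM A). prj A (prj A a) = prj A a)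
   \<and> (\<forall>a\<in>car (pM A). \<forall>b\<in>car (pM A).
        prj A (br (pM A) a b) = add (pM A) (br (pM A) (prj A a) b) (br (pM A) a (prj A b)))"

definition lpd_hom :: "('k::field,'c) lpd \<Rightarrow> ('k,'d) lpd \<Rightarrow> ('c \<Rightarrow> 'd) set" where
  "lpd_hom A B = {f. lie_hom (pM A) (pM B) f \<and> (\<forall>a\<in>car (pM A). f (prj A a) = prj B (f a))}"

definition Fobj :: "('k::field,'a,'b) rep \<Rightarrow> ('k,'a \<times> 'b) lpd" where
  "Fobj R = \<lparr> pM = \<lparr> car = car (rL R) \<times> car (rV R),
                     zer = (zer (rL R), zer (rV R)),
                     add = (\<lambda>(l1,v1) (l2,v2). (add (rL R) l1 l2, add (rV R) v1 v2)),
                     sm = (\<lambda>c (l,v). (sm (rL R) c l, sm (rV R) c v)),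
                     br = (\<lambda>(l1,v1) (l2,v2). (br (rL R) l1 l2,
                              sub (rV R) (act R l1 v2) (act R l2 v1))) \<rparr>,
             prj = (\<lambda>(l,v). (zer (rL R), v)) \<rparr>"

definition Fmor :: "('k::field,'a,'b) rep \<Rightarrow> ('a \<Rightarrow> 'c) \<times> ('b \<Rightarrow> 'd) \<Rightarrow> ('a \<times> 'b \<Rightarrow> 'c \<times> 'd)" where
  "Fmor R h = restrict (\<lambda>(l,v). (fst h l, snd h v)) (car (rL R) \<times> car (rV R))"

definition Fpairs :: "('k::field,'a,'b) rep \<Rightarrow> ((('a \<Rightarrow> 'c) \<times> ('b \<Rightarrow> 'd)) \<times> (('a \<Rightarrow> 'c) \<times> ('b \<Rightarrow> 'd))) set
     \<Rightarrow> (('a \<times> 'b \<Rightarrow> 'c \<times> 'd) \<times> ('a \<times> 'b \<Rightarrow> 'c \<times> 'd)) set" where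
  "Fpairs R B = (\<lambda>(h1,h2). (Fmor R h1, Fmor R h2)) ` B"

definition kerp :: "('k::field,'c) lpd \<Rightarrow> 'c set" where
  "kerp A = {m \<in> car (pM A). prj A m = zer (pM A)}"

definition imp :: "('k::field,'c) lpd \<Rightarrow> 'c set" where
  "imp A = prj A ` car (pM A)"

definition Finv :: "('k::field,'c) lpd \<Rightarrow> ('k,'c,'c) rep" where
  "Finv A = \<lparr> rL = \<lparr> car = kerp A, zer = zer (pM A), add = add (pM A), sm = sm (pM A), br = br (pM A) \<rparr>,
             rV = \<lparr> car = imp A, zer = zer (pM A), add = add (pM A), sm = sm (pM A) \<rparr>,
             act = br (pM A) \<rparr>"

text \<open>F^-1 on f : (M1,p1) -> (M2,p2): (r2 f kappa1, p2 f iota1) with r2 = id - p2.\<close>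
definition Finv_mor :: "('k::field,'c) lpd \<Rightarrow> ('k,'d) lpd \<Rightarrow> ('c \<Rightarrow> 'd) \<Rightarrow> ('c \<Rightarrow> 'd) \<times> ('c \<Rightarrow> 'd)" where
  "Finv_mor A1 A2 f = (restrict (\<lambda>m. sub (pM A2) (f m) (prj A2 (f m))) (kerp A1),
                        restrict (\<lambda>m. prj A2 (f m)) (imp A1))"

definition Finv_pairs :: "('k::field,'c) lpd \<Rightarrow> ('k,'d) lpd \<Rightarrow> (('c \<Rightarrow> 'd) \<times> ('c \<Rightarrow> 'd)) set
     \<Rightarrow> ((('c \<Rightarrow> 'd) \<times> ('c \<Rightarrow> 'd)) \<times> (('c \<Rightarrow> 'd) \<times> ('c \<Rightarrow> 'd))) set" where
  "Finv_pairs A1 A2 B = (\<lambda>(f,g). (Finv_mor A1 A2 f, Finv_mor A1 A2 g)) ` B"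

definition Tp_rep :: "('k::field,'a,'b) rep \<Rightarrow> ('k,'c,'d) rep \<Rightarrow> 'a set \<times> 'b set
    \<Rightarrow> (('a \<Rightarrow> 'c) \<times> ('b \<Rightarrow> 'd)) set" where
  "Tp_rep W H T = {h \<in> rep_hom W H. (\<forall>t\<in>fst T. fst h t = zer (rL H)) \<and> (\<forall>t\<in>snd T. snd h t = zer (rV H))}"

definition Tpp_rep :: "('k::field,'a,'b) rep \<Rightarrow> ('k,'c,'d) rep \<Rightarrow> 'a set \<times> 'b set \<Rightarrow> 'a set \<times> 'b set" where
  "Tpp_rep W H T = ({w \<in> car (rL W). \<forall>h\<in>Tp_rep W H T. fst h w = zer (rL H)},
                    {w \<in> car (rV W). \<forall>h\<in>Tp_rep W H T. snd h w = zer (rV H)})"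

definition Cl_rep :: "('k::field,'c,'d) rep \<Rightarrow> ('k,'a,'b) rep \<Rightarrow> ('a set \<times> 'b set) set" where
  "Cl_rep H W = {T. fst T \<subseteq> car (rL W) \<and> snd T \<subseteq> car (rV W) \<and> Tpp_rep W H T = T}"

definition Tp_lpd :: "('k::field,'a) lpd \<Rightarrow> ('k,'c) lpd \<Rightarrow> 'a set \<Rightarrow> ('a \<Rightarrow> 'c) set" where
  "Tp_lpd W N T = {h \<in> lpd_hom W N. \<forall>t\<in>T. h t = zer (pM N)}"

definition Tpp_lpd :: "('k::field,'a) lpd \<Rightarrow> ('k,'c) lpd \<Rightarrow> 'a set \<Rightarrow> 'a set" where
  "Tpp_lpd W N T = {w \<in> car (pM W). \<forall>h\<in>Tp_lpd W N T. h w = zer (pM N)}"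

definition Cl_lpd :: "('k::field,'c) lpd \<Rightarrow> ('k,'a) lpd \<Rightarrow> 'a set set" where
  "Cl_lpd N W = {T. T \<subseteq> car (pM W) \<and> Tpp_lpd W N T = T}"

definition beta_rep :: "('k::field,'a,'b) rep \<Rightarrow> ('k,'c,'d) rep \<Rightarrow> 'c set \<times> 'd set
   \<Rightarrow> ((('a \<Rightarrow> 'c) \<times> ('b \<Rightarrow> 'd)) \<times> (('a \<Rightarrow> 'c) \<times> ('b \<Rightarrow> 'd))) set" where
  "beta_rep W1 W2 T = {(h1,h2). h1 \<in> rep_hom W1 W2 \<and> h2 \<in> rep_hom W1 W2
     \<and> (\<forall>l\<in>car (rL W1). sub (rL W2) (fst h1 l) (fst h2 l) \<in> fst T)
     \<and> (\<forall>v\<in>car (rV W1). sub (rV W2) (snd h1 v) (snd h2 v) \<in> snd T)}"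

definition beta_lpd :: "('k::field,'a) lpd \<Rightarrow> ('k,'c) lpd \<Rightarrow> 'c set \<Rightarrow> (('a \<Rightarrow> 'c) \<times> ('a \<Rightarrow> 'c)) set" where
  "beta_lpd F1 F2 T = {(f,g). f \<in> lpd_hom F1 F2 \<and> g \<in> lpd_hom F1 F2
     \<and> (\<forall>a\<in>car (pM F1). sub (pM F2) (f a) (g a) \<in> T)}"

section \<open>Free objects, as term algebras modulo the equational theory\<close>

datatype ('k,'x) lt = LV 'x | L0 | LA "('k,'x) lt" "('k,'x) lt" | LS 'k "('k,'x) lt"
  | LB "('k,'x) lt" "('k,'x) lt"

fun lvars :: "('k,'x) lt \<Rightarrow> 'x set" where
  "lvars (LV x) = {x}" | "lvars L0 = {}" | "lvars (LA a b) = lvars a \<union> lvars b"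
| "lvars (LS c a) = lvars a" | "lvars (LB a b) = lvars a \<union> lvars b"

definition lax :: "(('k::field,'x) lt \<times> ('k,'x) lt) set" where
  "lax = {(LA (LA a b) c, LA a (LA b c)) | a b c. True}
       \<union> {(LA a b, LA b a) | a b. True}
       \<union> {(LA a L0, a) | a. True}
       \<union> {(LA a (LS (-1) a), L0) | a. True}
       \<union> {(LS c (LA a b), LA (LS c a) (LS c b)) | c a b. True}
       \<union> {(LS (c + d) a, LA (LS c a) (LS d a)) | c d a. True}
       \<union> {(LS (c * d) a, LS c (LS d a)) | c d a. True}
       \<union> {(LS 1 a, a) | a. True}
       \<union> {(LB (LA a b) c, LA (LB a c) (LB b c)) | a b c. True}
       \<union> {(LB a (LA b c), LA (LB a b) (LB a c)) | a b c. True}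
       \<union> {(LB (LS c a) b, LS c (LB a b)) | c a b. True}
       \<union> {(LB a (LS c b), LS c (LB a b)) | c a b. True}
       \<union> {(LB a a, L0) | a. True}
       \<union> {(LA (LA (LB a (LB b c)) (LB b (LB c a))) (LB c (LB a b)), L0) | a b c. True}"

inductive lc :: "'x set \<Rightarrow> ('k::field,'x) lt \<Rightarrow> ('k,'x) lt \<Rightarrow> bool" for X where
  lc_ax: "(s,t) \<in> lax \<Longrightarrow> lvars s \<subseteq> X \<Longrightarrow> lvars t \<subseteq> X \<Longrightarrow> lc X s t"
| lc_refl: "lvars s \<subseteq> X \<Longrightarrow> lc X s s"
| lc_sym: "lc X s t \<Longrightarrow> lc X t s"
| lc_trans: "lc X s t \<Longrightarrow> lc X t u \<Longrightarrow> lc X s u"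
| lc_LA: "lc X s s' \<Longrightarrow> lc X t t' \<Longrightarrow> lc X (LA s t) (LA s' t')"
| lc_LS: "lc X s s' \<Longrightarrow> lc X (LS c s) (LS c s')"
| lc_LB: "lc X s s' \<Longrightarrow> lc X t t' \<Longrightarrow> lc X (LB s t) (LB s' t')"

definition lcls :: "'x set \<Rightarrow> ('k::field,'x) lt \<Rightarrow> ('k,'x) lt set" where
  "lcls X t = {s. lc X t s}"

definition pick :: "'a set \<Rightarrow> 'a" where "pick A = (SOME a. a \<in> A)"

definition Lfree :: "'x set \<Rightarrow> ('k::field, ('k,'x) lt set) lie" where
  "Lfree X = \<lparr> car = {lcls X t | t. lvars t \<subseteq> X},
               zer = lcls X L0,
               add = (\<lambda>A B. lcls X (LA (pick A) (pick B))),
               sm = (\<lambda>c A. lcls X (LS c (pick A))),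
               br = (\<lambda>A B. lcls X (LB (pick A) (pick B))) \<rparr>"

datatype ('k,'x,'y) mt = MV 'y | M0 | MA "('k,'x,'y) mt" "('k,'x,'y) mt" | MS 'k "('k,'x,'y) mt"
  | MT "('k,'x) lt" "('k,'x,'y) mt"

fun mxv :: "('k,'x,'y) mt \<Rightarrow> 'x set" where
  "mxv (MV y) = {}" | "mxv M0 = {}" | "mxv (MA a b) = mxv a \<union> mxv b"
| "mxv (MS c a) = mxv a" | "mxv (MT l a) = lvars l \<union> mxv a"

fun myv :: "('k,'x,'y) mt \<Rightarrow> 'y set" where
  "myv (MV y) = {y}" | "myv M0 = {}" | "myv (MA a b) = myv a \<union> myv b"
| "myv (MS c a) = myv a" | "myv (MT l a) = myv a"

definition max_ax :: "(('k::field,'x,'y) mt \<times> ('k,'x,'y) mt) set" where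
  "max_ax = {(MA (MA a b) c, MA a (MA b c)) | a b c. True}
       \<union> {(MA a b, MA b a) | a b. True}
       \<union> {(MA a M0, a) | a. True}
       \<union> {(MA a (MS (-1) a), M0) | a. True}
       \<union> {(MS c (MA a b), MA (MS c a) (MS c b)) | c a b. True}
       \<union> {(MS (c + d) a, MA (MS c a) (MS d a)) | c d a. True}
       \<union> {(MS (c * d) a, MS c (MS d a)) | c d a. True}
       \<union> {(MS 1 a, a) | a. True}
       \<union> {(MT (LA l1 l2) v, MA (MT l1 v) (MT l2 v)) | l1 l2 v. True}
       \<union> {(MT (LS c l) v, MS c (MT l v)) | c l v. True}
       \<union> {(MT l (MA u v), MA (MT l u) (MT l v)) | l u v. True}
       \<union> {(MT l (MS c v), MS c (MT l v)) | l c v. True}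
       \<union> {(MT (LB l1 l2) v, MA (MT l1 (MT l2 v)) (MS (-1) (MT l2 (MT l1 v)))) | l1 l2 v. True}"

inductive mc :: "'x set \<Rightarrow> 'y set \<Rightarrow> ('k::field,'x,'y) mt \<Rightarrow> ('k,'x,'y) mt \<Rightarrow> bool" for X Y where
  mc_ax: "(s,t) \<in> max_ax \<Longrightarrow> mxv s \<subseteq> X \<Longrightarrow> myv s \<subseteq> Y \<Longrightarrow> mxv t \<subseteq> X \<Longrightarrow> myv t \<subseteq> Y \<Longrightarrow> mc X Y s t"
| mc_refl: "mxv s \<subseteq> X \<Longrightarrow> myv s \<subseteq> Y \<Longrightarrow> mc X Y s s"
| mc_sym: "mc X Y s t \<Longrightarrow> mc X Y t s"
| mc_trans: "mc X Y s t \<Longrightarrow> mc X Y t u \<Longrightarrow> mc X Y s u"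
| mc_MA: "mc X Y s s' \<Longrightarrow> mc X Y t t' \<Longrightarrow> mc X Y (MA s t) (MA s' t')"
| mc_MS: "mc X Y s s' \<Longrightarrow> mc X Y (MS c s) (MS c s')"
| mc_MT: "lc X l l' \<Longrightarrow> mc X Y s s' \<Longrightarrow> mc X Y (MT l s) (MT l' s')"

definition mcls :: "'x set \<Rightarrow> 'y set \<Rightarrow> ('k::field,'x,'y) mt \<Rightarrow> ('k,'x,'y) mt set" where
  "mcls X Y t = {s. mc X Y t s}"

definition Wfree :: "'x set \<Rightarrow> 'y set \<Rightarrow> ('k::field, ('k,'x) lt set, ('k,'x,'y) mt set) rep" where
  "Wfree X Y = \<lparr> rL = Lfree X,
                 rV = \<lparr> car = {mcls X Y t | t. mxv t \<subseteq> X \<and> myv t \<subseteq> Y},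
                        zer = mcls X Y M0,
                        add = (\<lambda>A B. mcls X Y (MA (pick A) (pick B))),
                        sm = (\<lambda>c A. mcls X Y (MS c (pick A))) \<rparr>,
                 act = (\<lambda>A B. mcls X Y (MT (pick A) (pick B))) \<rparr>"

datatype ('k,'x) pt = PV 'x | P0 | PA "('k,'x) pt" "('k,'x) pt" | PS 'k "('k,'x) pt"
  | PB "('k,'x) pt" "('k,'x) pt" | PP "('k,'x) pt"

fun pvars :: "('k,'x) pt \<Rightarrow> 'x set" where
  "pvars (PV x) = {x}" | "pvars P0 = {}" | "pvars (PA a b) = pvars a \<union> pvars b"
| "pvars (PS c a) = pvars a" | "pvars (PB a b) = pvars a \<union> pvars b" | "pvars (PP a) = pvars a"

definition pax :: "(('k::field,'x) pt \<times> ('k,'x) pt) set" where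
  "pax = {(PA (PA a b) c, PA a (PA b c)) | a b c. True}
       \<union> {(PA a b, PA b a) | a b. True}
       \<union> {(PA a P0, a) | a. True}
       \<union> {(PA a (PS (-1) a), P0) | a. True}
       \<union> {(PS c (PA a b), PA (PS c a) (PS c b)) | c a b. True}
       \<union> {(PS (c + d) a, PA (PS c a) (PS d a)) | c d a. True}
       \<union> {(PS (c * d) a, PS c (PS d a)) | c d a. True}
       \<union> {(PS 1 a, a) | a. True}
       \<union> {(PB (PA a b) c, PA (PB a c) (PB b c)) | a b c. True}
       \<union> {(PB a (PA b c), PA (PB a b) (PB a c)) | a b c. True}
       \<union> {(PB (PS c a) b, PS c (PB a b)) | c a b. True}
       \<union> {(PB a (PS c b), PS c (PB a b)) | c a b. True}
       \<union> {(PB a a, P0) | a. True}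
       \<union> {(PA (PA (PB a (PB b c)) (PB b (PB c a))) (PB c (PB a b)), P0) | a b c. True}
       \<union> {(PP (PA a b), PA (PP a) (PP b)) | a b. True}
       \<union> {(PP (PS c a), PS c (PP a)) | c a. True}
       \<union> {(PP (PP a), PP a) | a. True}
       \<union> {(PP (PB a b), PA (PB (PP a) b) (PB a (PP b))) | a b. True}"

inductive pc :: "'x set \<Rightarrow> ('k::field,'x) pt \<Rightarrow> ('k,'x) pt \<Rightarrow> bool" for M where
  pc_ax: "(s,t) \<in> pax \<Longrightarrow> pvars s \<subseteq> M \<Longrightarrow> pvars t \<subseteq> M \<Longrightarrow> pc M s t"
| pc_refl: "pvars s \<subseteq> M \<Longrightarrow> pc M s s"
| pc_sym: "pc M s t \<Longrightarrow> pc M t s"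
| pc_trans: "pc M s t \<Longrightarrow> pc M t u \<Longrightarrow> pc M s u"
| pc_PA: "pc M s s' \<Longrightarrow> pc M t t' \<Longrightarrow> pc M (PA s t) (PA s' t')"
| pc_PS: "pc M s s' \<Longrightarrow> pc M (PS c s) (PS c s')"
| pc_PB: "pc M s s' \<Longrightarrow> pc M t t' \<Longrightarrow> pc M (PB s t) (PB s' t')"
| pc_PP: "pc M s s' \<Longrightarrow> pc M (PP s) (PP s')"

definition pcls :: "'x set \<Rightarrow> ('k::field,'x) pt \<Rightarrow> ('k,'x) pt set" where
  "pcls M t = {s. pc M t s}"

definition Ffree :: "'x set \<Rightarrow> ('k::field, ('k,'x) pt set) lpd" where
  "Ffree M = \<lparr> pM = \<lparr> car = {pcls M t | t. pvars t \<subseteq> M},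
                      zer = pcls M P0,
                      add = (\<lambda>A B. pcls M (PA (pick A) (pick B))),
                      sm = (\<lambda>c A. pcls M (PS c (pick A))),
                      br = (\<lambda>A B. pcls M (PB (pick A) (pick B))) \<rparr>,
               prj = (\<lambda>A. pcls M (PP (pick A))) \<rparr>"

end

theory Submission
  imports Defs
begin


lemma lc_vars: "lc X s t \<Longrightarrow> lvars s \<subseteq> X \<and> lvars t \<subseteq> X"
  by (induction rule: lc.induct) auto

lemma lcls_eq: "lc X s t \<Longrightarrow> lcls X s = lcls X t"
  unfolding lcls_def by (rule Collect_cong) (metis lc_sym lc_trans)

lemma pick_lcls: "lvars t \<subseteq> X \<Longrightarrow> lc X t (pick (lcls X t))"
  unfolding pick_def lcls_def by (metis (mono_tags) someI mem_Collect_eq lc_refl)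

lemma pick_lcls': "lvars t \<subseteq> X \<Longrightarrow> lc X (pick (lcls X t)) t"
  by (rule lc_sym, rule pick_lcls)

lemma lcls_pick: "lvars t \<subseteq> X \<Longrightarrow> lcls X (pick (lcls X t)) = lcls X t"
  using lcls_eq[OF pick_lcls] by metis

lemma pick_lvars: "lvars t \<subseteq> X \<Longrightarrow> lvars (pick (lcls X t)) \<subseteq> X"
  using lc_vars[OF pick_lcls] by blast

lemma Lfree_add: "lvars a \<subseteq> X \<Longrightarrow> lvars b \<subseteq> X \<Longrightarrow> add (Lfree X) (lcls X a) (lcls X b) = lcls X (LA a b)"
  unfolding Lfree_def by (simp, intro lcls_eq lc_LA pick_lcls')
lemma Lfree_sm: "lvars a \<subseteq> X \<Longrightarrow> sm (Lfree X) c (lcls X a) = lcls X (LS c a)"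
  unfolding Lfree_def by (simp, intro lcls_eq lc_LS pick_lcls')
lemma Lfree_br: "lvars a \<subseteq> X \<Longrightarrow> lvars b \<subseteq> X \<Longrightarrow> br (Lfree X) (lcls X a) (lcls X b) = lcls X (LB a b)"
  unfolding Lfree_def by (simp, intro lcls_eq lc_LB pick_lcls')
lemma Lfree_zer: "zer (Lfree X) = lcls X L0" unfolding Lfree_def by simp
lemma Lfree_car: "car (Lfree X) = {lcls X t | t. lvars t \<subseteq> X}" unfolding Lfree_def by simp

lemma ball_Lfree: "(\<forall>a\<in>car (Lfree X). P a) = (\<forall>t. lvars t \<subseteq> X \<longrightarrow> P (lcls X t))"
  unfolding Lfree_car by auto

lemma lax_eq: "(s,t) \<in> lax \<Longrightarrow> lvars s \<subseteq> X \<Longrightarrow> lvars t \<subseteq> X \<Longrightarrow> lcls X s = lcls X t"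
  by (rule lcls_eq, rule lc_ax)

lemma lcls_in: "lvars t \<subseteq> X \<Longrightarrow> lcls X t \<in> car (Lfree X)"
  unfolding Lfree_car by auto

lemma lax1: "(LA (LA a b) c, LA a (LA b c)) \<in> lax" unfolding lax_def by (rule UnI1, rule UnI1, rule UnI1, rule UnI1, rule UnI1, rule UnI1, rule UnI1, rule UnI1, rule UnI1, rule UnI1, rule UnI1, rule UnI1, rule UnI1) blast
lemma lax2: "(LA a b, LA b a) \<in> lax" unfolding lax_def by (rule UnI1, rule UnI1, rule UnI1, rule UnI1, rule UnI1, rule UnI1, rule UnI1, rule UnI1, rule UnI1, rule UnI1, rule UnI1, rule UnI1, rule UnI2) blast
lemma lax3: "(LA a L0, a) \<in> lax" unfolding lax_def by (rule UnI1, rule UnI1, rule UnI1, rule UnI1, rule UnI1, rule UnI1, rule UnI1, rule UnI1, rule UnI1, rule UnI1, rule UnI1, rule UnI2) blast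
lemma lax4: "(LA a (LS (-1) a), L0) \<in> lax" unfolding lax_def by (rule UnI1, rule UnI1, rule UnI1, rule UnI1, rule UnI1, rule UnI1, rule UnI1, rule UnI1, rule UnI1, rule UnI1, rule UnI2) blast
lemma lax5: "(LS c (LA a b), LA (LS c a) (LS c b)) \<in> lax" unfolding lax_def by (rule UnI1, rule UnI1, rule UnI1, rule UnI1, rule UnI1, rule UnI1, rule UnI1, rule UnI1, rule UnI1, rule UnI2) blast
lemma lax6: "(LS (c + d) a, LA (LS c a) (LS d a)) \<in> lax" unfolding lax_def by (rule UnI1, rule UnI1, rule UnI1, rule UnI1, rule UnI1, rule UnI1, rule UnI1, rule UnI1, rule UnI2) blast
lemma lax7: "(LS (c * d) a, LS c (LS d a)) \<in> lax" unfolding lax_def by (rule UnI1, rule UnI1, rule UnI1, rule UnI1, rule UnI1, rule UnI1, rule UnI1, rule UnI2) blast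
lemma lax8: "(LS 1 a, a) \<in> lax" unfolding lax_def by (rule UnI1, rule UnI1, rule UnI1, rule UnI1, rule UnI1, rule UnI1, rule UnI2) blast
lemma lax9: "(LB (LA a b) c, LA (LB a c) (LB b c)) \<in> lax" unfolding lax_def by (rule UnI1, rule UnI1, rule UnI1, rule UnI1, rule UnI1, rule UnI2) blast
lemma lax10: "(LB a (LA b c), LA (LB a b) (LB a c)) \<in> lax" unfolding lax_def by (rule UnI1, rule UnI1, rule UnI1, rule UnI1, rule UnI2) blast
lemma lax11: "(LB (LS c a) b, LS c (LB a b)) \<in> lax" unfolding lax_def by (rule UnI1, rule UnI1, rule UnI1, rule UnI2) blast
lemma lax12: "(LB a (LS c b), LS c (LB a b)) \<in> lax" unfolding lax_def by (rule UnI1, rule UnI1, rule UnI2) blast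
lemma lax13: "(LB a a, L0) \<in> lax" unfolding lax_def by (rule UnI1, rule UnI2) blast
lemma lax14: "(LA (LA (LB a (LB b c)) (LB b (LB c a))) (LB c (LB a b)), L0) \<in> lax" unfolding lax_def by (rule UnI2) blast
lemma max_ax1: "(MA (MA a b) c, MA a (MA b c)) \<in> max_ax" unfolding max_ax_def by (rule UnI1, rule UnI1, rule UnI1, rule UnI1, rule UnI1, rule UnI1, rule UnI1, rule UnI1, rule UnI1, rule UnI1, rule UnI1, rule UnI1) blast
lemma max_ax2: "(MA a b, MA b a) \<in> max_ax" unfolding max_ax_def by (rule UnI1, rule UnI1, rule UnI1, rule UnI1, rule UnI1, rule UnI1, rule UnI1, rule UnI1, rule UnI1, rule UnI1, rule UnI1, rule UnI2) blast
lemma max_ax3: "(MA a M0, a) \<in> max_ax" unfolding max_ax_def by (rule UnI1, rule UnI1, rule UnI1, rule UnI1, rule UnI1, rule UnI1, rule UnI1, rule UnI1, rule UnI1, rule UnI1, rule UnI2) blast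
lemma max_ax4: "(MA a (MS (-1) a), M0) \<in> max_ax" unfolding max_ax_def by (rule UnI1, rule UnI1, rule UnI1, rule UnI1, rule UnI1, rule UnI1, rule UnI1, rule UnI1, rule UnI1, rule UnI2) blast
lemma max_ax5: "(MS c (MA a b), MA (MS c a) (MS c b)) \<in> max_ax" unfolding max_ax_def by (rule UnI1, rule UnI1, rule UnI1, rule UnI1, rule UnI1, rule UnI1, rule UnI1, rule UnI1, rule UnI2) blast
lemma max_ax6: "(MS (c + d) a, MA (MS c a) (MS d a)) \<in> max_ax" unfolding max_ax_def by (rule UnI1, rule UnI1, rule UnI1, rule UnI1, rule UnI1, rule UnI1, rule UnI1, rule UnI2) blast
lemma max_ax7: "(MS (c * d) a, MS c (MS d a)) \<in> max_ax" unfolding max_ax_def by (rule UnI1, rule UnI1, rule UnI1, rule UnI1, rule UnI1, rule UnI1, rule UnI2) blast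
lemma max_ax8: "(MS 1 a, a) \<in> max_ax" unfolding max_ax_def by (rule UnI1, rule UnI1, rule UnI1, rule UnI1, rule UnI1, rule UnI2) blast
lemma max_ax9: "(MT (LA l1 l2) v, MA (MT l1 v) (MT l2 v)) \<in> max_ax" unfolding max_ax_def by (rule UnI1, rule UnI1, rule UnI1, rule UnI1, rule UnI2) blast
lemma max_ax10: "(MT (LS c l) v, MS c (MT l v)) \<in> max_ax" unfolding max_ax_def by (rule UnI1, rule UnI1, rule UnI1, rule UnI2) blast
lemma max_ax11: "(MT l (MA u v), MA (MT l u) (MT l v)) \<in> max_ax" unfolding max_ax_def by (rule UnI1, rule UnI1, rule UnI2) blast
lemma max_ax12: "(MT l (MS c v), MS c (MT l v)) \<in> max_ax" unfolding max_ax_def by (rule UnI1, rule UnI2) blast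
lemma max_ax13: "(MT (LB l1 l2) v, MA (MT l1 (MT l2 v)) (MS (-1) (MT l2 (MT l1 v)))) \<in> max_ax" unfolding max_ax_def by (rule UnI2) blast
lemma pax1: "(PA (PA a b) c, PA a (PA b c)) \<in> pax" unfolding pax_def by (rule UnI1, rule UnI1, rule UnI1, rule UnI1, rule UnI1, rule UnI1, rule UnI1, rule UnI1, rule UnI1, rule UnI1, rule UnI1, rule UnI1, rule UnI1, rule UnI1, rule UnI1, rule UnI1, rule UnI1) blast
lemma pax2: "(PA a b, PA b a) \<in> pax" unfolding pax_def by (rule UnI1, rule UnI1, rule UnI1, rule UnI1, rule UnI1, rule UnI1, rule UnI1, rule UnI1, rule UnI1, rule UnI1, rule UnI1, rule UnI1, rule UnI1, rule UnI1, rule UnI1, rule UnI1, rule UnI2) blast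
lemma pax3: "(PA a P0, a) \<in> pax" unfolding pax_def by (rule UnI1, rule UnI1, rule UnI1, rule UnI1, rule UnI1, rule UnI1, rule UnI1, rule UnI1, rule UnI1, rule UnI1, rule UnI1, rule UnI1, rule UnI1, rule UnI1, rule UnI1, rule UnI2) blast
lemma pax4: "(PA a (PS (-1) a), P0) \<in> pax" unfolding pax_def by (rule UnI1, rule UnI1, rule UnI1, rule UnI1, rule UnI1, rule UnI1, rule UnI1, rule UnI1, rule UnI1, rule UnI1, rule UnI1, rule UnI1, rule UnI1, rule UnI1, rule UnI2) blast
lemma pax5: "(PS c (PA a b), PA (PS c a) (PS c b)) \<in> pax" unfolding pax_def by (rule UnI1, rule UnI1, rule UnI1, rule UnI1, rule UnI1, rule UnI1, rule UnI1, rule UnI1, rule UnI1, rule UnI1, rule UnI1, rule UnI1, rule UnI1, rule UnI2) blast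
lemma pax6: "(PS (c + d) a, PA (PS c a) (PS d a)) \<in> pax" unfolding pax_def by (rule UnI1, rule UnI1, rule UnI1, rule UnI1, rule UnI1, rule UnI1, rule UnI1, rule UnI1, rule UnI1, rule UnI1, rule UnI1, rule UnI1, rule UnI2) blast
lemma pax7: "(PS (c * d) a, PS c (PS d a)) \<in> pax" unfolding pax_def by (rule UnI1, rule UnI1, rule UnI1, rule UnI1, rule UnI1, rule UnI1, rule UnI1, rule UnI1, rule UnI1, rule UnI1, rule UnI1, rule UnI2) blast
lemma pax8: "(PS 1 a, a) \<in> pax" unfolding pax_def by (rule UnI1, rule UnI1, rule UnI1, rule UnI1, rule UnI1, rule UnI1, rule UnI1, rule UnI1, rule UnI1, rule UnI1, rule UnI2) blast
lemma pax9: "(PB (PA a b) c, PA (PB a c) (PB b c)) \<in> pax" unfolding pax_def by (rule UnI1, rule UnI1, rule UnI1, rule UnI1, rule UnI1, rule UnI1, rule UnI1, rule UnI1, rule UnI1, rule UnI2) blast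
lemma pax10: "(PB a (PA b c), PA (PB a b) (PB a c)) \<in> pax" unfolding pax_def by (rule UnI1, rule UnI1, rule UnI1, rule UnI1, rule UnI1, rule UnI1, rule UnI1, rule UnI1, rule UnI2) blast
lemma pax11: "(PB (PS c a) b, PS c (PB a b)) \<in> pax" unfolding pax_def by (rule UnI1, rule UnI1, rule UnI1, rule UnI1, rule UnI1, rule UnI1, rule UnI1, rule UnI2) blast
lemma pax12: "(PB a (PS c b), PS c (PB a b)) \<in> pax" unfolding pax_def by (rule UnI1, rule UnI1, rule UnI1, rule UnI1, rule UnI1, rule UnI1, rule UnI2) blast
lemma pax13: "(PB a a, P0) \<in> pax" unfolding pax_def by (rule UnI1, rule UnI1, rule UnI1, rule UnI1, rule UnI1, rule UnI2) blast
lemma pax14: "(PA (PA (PB a (PB b c)) (PB b (PB c a))) (PB c (PB a b)), P0) \<in> pax" unfolding pax_def by (rule UnI1, rule UnI1, rule UnI1, rule UnI1, rule UnI2) blast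
lemma pax15: "(PP (PA a b), PA (PP a) (PP b)) \<in> pax" unfolding pax_def by (rule UnI1, rule UnI1, rule UnI1, rule UnI2) blast
lemma pax16: "(PP (PS c a), PS c (PP a)) \<in> pax" unfolding pax_def by (rule UnI1, rule UnI1, rule UnI2) blast
lemma pax17: "(PP (PP a), PP a) \<in> pax" unfolding pax_def by (rule UnI1, rule UnI2) blast
lemma pax18: "(PP (PB a b), PA (PB (PP a) b) (PB a (PP b))) \<in> pax" unfolding pax_def by (rule UnI2) blast


lemmas lax_all = lax1 lax2 lax3 lax4 lax5 lax6 lax7 lax8 lax9 lax10 lax11 lax12 lax13 lax14

lemma lie_Lfree: "lie_alg (Lfree X)"
  unfolding lie_alg_def vspace_def ball_Lfree
  apply (simp add: Lfree_add Lfree_sm Lfree_br Lfree_zer lcls_in)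
  apply (intro conjI allI impI)
  apply (rule lax_eq, rule lax_all, simp, simp)+
  done

lemmas max_all = max_ax1 max_ax2 max_ax3 max_ax4 max_ax5 max_ax6 max_ax7 max_ax8 max_ax9 max_ax10 max_ax11 max_ax12 max_ax13
lemmas pax_all = pax1 pax2 pax3 pax4 pax5 pax6 pax7 pax8 pax9 pax10 pax11 pax12 pax13 pax14 pax15 pax16 pax17 pax18

lemma mc_vars: "mc X Y s t \<Longrightarrow> mxv s \<subseteq> X \<and> myv s \<subseteq> Y \<and> mxv t \<subseteq> X \<and> myv t \<subseteq> Y"
  by (induction rule: mc.induct) (auto dest: lc_vars)

lemma mcls_eq: "mc X Y s t \<Longrightarrow> mcls X Y s = mcls X Y t"
  unfolding mcls_def by (rule Collect_cong) (metis mc_sym mc_trans)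

lemma pick_mcls: "mxv t \<subseteq> X \<Longrightarrow> myv t \<subseteq> Y \<Longrightarrow> mc X Y t (pick (mcls X Y t))"
  unfolding pick_def mcls_def by (metis (mono_tags) someI mem_Collect_eq mc_refl)

lemma pick_mcls': "mxv t \<subseteq> X \<Longrightarrow> myv t \<subseteq> Y \<Longrightarrow> mc X Y (pick (mcls X Y t)) t"
  by (rule mc_sym, rule pick_mcls)

lemma Wfree_rL: "rL (Wfree X Y) = Lfree X" unfolding Wfree_def by simp
lemma Wfree_car: "car (rV (Wfree X Y)) = {mcls X Y t | t. mxv t \<subseteq> X \<and> myv t \<subseteq> Y}" unfolding Wfree_def by simp
lemma Wfree_zer: "zer (rV (Wfree X Y)) = mcls X Y M0" unfolding Wfree_def by simp
lemma Wfree_add: "mxv a \<subseteq> X \<Longrightarrow> myv a \<subseteq> Y \<Longrightarrow> mxv b \<subseteq> X \<Longrightarrow> myv b \<subseteq> Y \<Longrightarrow>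
   add (rV (Wfree X Y)) (mcls X Y a) (mcls X Y b) = mcls X Y (MA a b)"
  unfolding Wfree_def by (simp, intro mcls_eq mc_MA pick_mcls')
lemma Wfree_sm: "mxv a \<subseteq> X \<Longrightarrow> myv a \<subseteq> Y \<Longrightarrow>
   sm (rV (Wfree X Y)) c (mcls X Y a) = mcls X Y (MS c a)"
  unfolding Wfree_def by (simp, intro mcls_eq mc_MS pick_mcls')
lemma Wfree_act: "lvars l \<subseteq> X \<Longrightarrow> mxv a \<subseteq> X \<Longrightarrow> myv a \<subseteq> Y \<Longrightarrow>
   act (Wfree X Y) (lcls X l) (mcls X Y a) = mcls X Y (MT l a)"
  unfolding Wfree_def by (simp, intro mcls_eq mc_MT pick_mcls' pick_lcls')
lemma ball_W: "(\<forall>a\<in>car (rV (Wfree X Y)). P a) = (\<forall>t. mxv t \<subseteq> X \<longrightarrow> myv t \<subseteq> Y \<longrightarrow> P (mcls X Y t))"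
  unfolding Wfree_car by auto
lemma mcls_in: "mxv t \<subseteq> X \<Longrightarrow> myv t \<subseteq> Y \<Longrightarrow> mcls X Y t \<in> car (rV (Wfree X Y))"
  unfolding Wfree_car by auto
lemma max_eq: "(s,t) \<in> max_ax \<Longrightarrow> mxv s \<subseteq> X \<Longrightarrow> myv s \<subseteq> Y \<Longrightarrow> mxv t \<subseteq> X \<Longrightarrow> myv t \<subseteq> Y \<Longrightarrow> mcls X Y s = mcls X Y t"
  by (rule mcls_eq, rule mc_ax)

lemma rep_Wfree: "is_rep (Wfree X Y)"
  unfolding is_rep_def Wfree_rL vspace_def ball_Lfree ball_W sub_def
  apply (simp add: lie_Lfree Lfree_add Lfree_sm Lfree_br Lfree_zer lcls_in Wfree_add Wfree_sm Wfree_zer Wfree_act mcls_in)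
  apply (intro conjI allI impI)
  apply (rule max_eq, rule max_all, simp, simp, simp, simp)+
  done

lemma pc_vars: "pc M s t \<Longrightarrow> pvars s \<subseteq> M \<and> pvars t \<subseteq> M"
  by (induction rule: pc.induct) auto

lemma pcls_eq: "pc M s t \<Longrightarrow> pcls M s = pcls M t"
  unfolding pcls_def by (rule Collect_cong) (metis pc_sym pc_trans)

lemma pick_pcls: "pvars t \<subseteq> M \<Longrightarrow> pc M t (pick (pcls M t))"
  unfolding pick_def pcls_def by (metis (mono_tags) someI mem_Collect_eq pc_refl)

lemma pick_pcls': "pvars t \<subseteq> M \<Longrightarrow> pc M (pick (pcls M t)) t"
  by (rule pc_sym, rule pick_pcls)

lemma Ffree_car: "car (pM (Ffree M)) = {pcls M t | t. pvars t \<subseteq> M}" unfolding Ffree_def by simp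
lemma Ffree_zer: "zer (pM (Ffree M)) = pcls M P0" unfolding Ffree_def by simp
lemma Ffree_add: "pvars a \<subseteq> M \<Longrightarrow> pvars b \<subseteq> M \<Longrightarrow> add (pM (Ffree M)) (pcls M a) (pcls M b) = pcls M (PA a b)"
  unfolding Ffree_def by (simp, intro pcls_eq pc_PA pick_pcls')
lemma Ffree_br: "pvars a \<subseteq> M \<Longrightarrow> pvars b \<subseteq> M \<Longrightarrow> br (pM (Ffree M)) (pcls M a) (pcls M b) = pcls M (PB a b)"
  unfolding Ffree_def by (simp, intro pcls_eq pc_PB pick_pcls')
lemma Ffree_sm: "pvars a \<subseteq> M \<Longrightarrow> sm (pM (Ffree M)) c (pcls M a) = pcls M (PS c a)"
  unfolding Ffree_def by (simp, intro pcls_eq pc_PS pick_pcls')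
lemma Ffree_prj: "pvars a \<subseteq> M \<Longrightarrow> prj (Ffree M) (pcls M a) = pcls M (PP a)"
  unfolding Ffree_def by (simp, intro pcls_eq pc_PP pick_pcls')
lemma ball_F: "(\<forall>a\<in>car (pM (Ffree M)). P a) = (\<forall>t. pvars t \<subseteq> M \<longrightarrow> P (pcls M t))"
  unfolding Ffree_car by auto
lemma pcls_in: "pvars t \<subseteq> M \<Longrightarrow> pcls M t \<in> car (pM (Ffree M))"
  unfolding Ffree_car by auto
lemma pax_eq: "(s,t) \<in> pax \<Longrightarrow> pvars s \<subseteq> M \<Longrightarrow> pvars t \<subseteq> M \<Longrightarrow> pcls M s = pcls M t"
  by (rule pcls_eq, rule pc_ax)

lemma lpd_Ffree: "is_lpd (Ffree M)"
  unfolding is_lpd_def lie_alg_def vspace_def ball_F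
  apply (simp add: Ffree_add Ffree_sm Ffree_br Ffree_zer Ffree_prj pcls_in)
  apply (intro conjI allI impI)
  apply (rule pax_eq, rule pax_all, simp, simp)+
  done



locale vsp = fixes V :: "('k::field,'a,'m) vs_scheme" assumes vs: "vspace V"
begin
lemma zer_in[simp]: "zer V \<in> car V" using vs unfolding vspace_def by auto
lemma add_in[simp]: "a \<in> car V \<Longrightarrow> b \<in> car V \<Longrightarrow> add V a b \<in> car V" using vs unfolding vspace_def by auto
lemma sm_in[simp]: "a \<in> car V \<Longrightarrow> sm V c a \<in> car V" using vs unfolding vspace_def by auto
lemma assoc: "a \<in> car V \<Longrightarrow> b \<in> car V \<Longrightarrow> c \<in> car V \<Longrightarrow> add V (add V a b) c = add V a (add V b c)" using vs unfolding vspace_def by auto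
lemma comm: "a \<in> car V \<Longrightarrow> b \<in> car V \<Longrightarrow> add V a b = add V b a" using vs unfolding vspace_def by auto
lemma rzero[simp]: "a \<in> car V \<Longrightarrow> add V a (zer V) = a" using vs unfolding vspace_def by auto
lemma rinv[simp]: "a \<in> car V \<Longrightarrow> add V a (sm V (-1) a) = zer V" using vs unfolding vspace_def by auto
lemma sm_add: "a \<in> car V \<Longrightarrow> b \<in> car V \<Longrightarrow> sm V c (add V a b) = add V (sm V c a) (sm V c b)" using vs unfolding vspace_def by auto
lemma add_sm: "a \<in> car V \<Longrightarrow> sm V (c + d) a = add V (sm V c a) (sm V d a)" using vs unfolding vspace_def by auto
lemma sm_sm: "a \<in> car V \<Longrightarrow> sm V c (sm V d a) = sm V (c * d) a" using vs unfolding vspace_def by metis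
lemma sm_one[simp]: "a \<in> car V \<Longrightarrow> sm V 1 a = a" using vs unfolding vspace_def by auto
lemma lcomm: "a \<in> car V \<Longrightarrow> b \<in> car V \<Longrightarrow> c \<in> car V \<Longrightarrow> add V a (add V b c) = add V b (add V a c)"
  by (metis assoc comm)
lemmas ac = assoc comm lcomm
lemma lzero[simp]: "a \<in> car V \<Longrightarrow> add V (zer V) a = a" by (metis comm rzero zer_in)
lemma linv[simp]: "a \<in> car V \<Longrightarrow> add V (sm V (-1) a) a = zer V" by (metis comm rinv sm_in)
lemma cancel: assumes "a \<in> car V" "b \<in> car V" "c \<in> car V" "add V a b = add V a c" shows "b = c"
proof -
  have "b = add V (add V (sm V (-1) a) a) b" using assms(1-3) by simp
  also have "\<dots> = add V (sm V (-1) a) (add V a b)" using assms(1-3) by (intro assoc) simp_all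
  also have "\<dots> = add V (sm V (-1) a) (add V a c)" using assms by simp
  also have "\<dots> = c" using assms(1-3) by (simp add: assoc[symmetric])
  finally show ?thesis .
qed
lemma sm0[simp]: "a \<in> car V \<Longrightarrow> sm V 0 a = zer V"
proof -
  assume a: "a \<in> car V"
  have "add V (sm V 0 a) (sm V 0 a) = add V (sm V 0 a) (zer V)" using add_sm[OF a, of 0 0] a by simp
  thus ?thesis using a cancel by (metis sm_in zer_in)
qed
lemma sm_zer[simp]: "sm V c (zer V) = zer V"
  by (metis sm0 sm_sm zer_in mult_zero_right)
lemma sub_in[simp]: "a \<in> car V \<Longrightarrow> b \<in> car V \<Longrightarrow> sub V a b \<in> car V" by (simp add: sub_def)
lemma sub_self[simp]: "a \<in> car V \<Longrightarrow> sub V a a = zer V" by (simp add: sub_def)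
lemma sub_zer[simp]: "a \<in> car V \<Longrightarrow> sub V a (zer V) = a" by (simp add: sub_def)
lemma neg_neg[simp]: "a \<in> car V \<Longrightarrow> sm V (-1) (sm V (-1) a) = a" by (simp add: sm_sm)
lemma sub_add_sub: "a \<in> car V \<Longrightarrow> b \<in> car V \<Longrightarrow> c \<in> car V \<Longrightarrow> d \<in> car V \<Longrightarrow>
   sub V (add V a b) (add V c d) = add V (sub V a c) (sub V b d)"
  unfolding sub_def by (simp add: sm_add ac)
lemma add_sub_cancel[simp]: "a \<in> car V \<Longrightarrow> b \<in> car V \<Longrightarrow> sub V (add V a b) b = a"
  unfolding sub_def by (simp add: assoc)
lemma sub_add_cancel[simp]: "a \<in> car V \<Longrightarrow> b \<in> car V \<Longrightarrow> add V (sub V a b) b = a"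
  unfolding sub_def by (simp add: assoc)
lemma sub_eq_zer: "a \<in> car V \<Longrightarrow> b \<in> car V \<Longrightarrow> sub V a b = zer V \<Longrightarrow> a = b"
  by (metis sub_add_cancel lzero)
lemma double_zer: assumes "a \<in> car V" "add V a a = a" shows "a = zer V"
  using cancel[OF assms(1) assms(1) zer_in] assms by simp
end
lemma linmap_in: "linmap V W f \<Longrightarrow> a \<in> car V \<Longrightarrow> f a \<in> car W"
  unfolding linmap_def by auto
lemma linmap_add: "linmap V W f \<Longrightarrow> a \<in> car V \<Longrightarrow> b \<in> car V \<Longrightarrow> f (add V a b) = add W (f a) (f b)"
  unfolding linmap_def by auto
lemma linmap_sm: "linmap V W f \<Longrightarrow> a \<in> car V \<Longrightarrow> f (sm V c a) = sm W c (f a)"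
  unfolding linmap_def by auto
lemma linmap_zer: "vspace V \<Longrightarrow> vspace W \<Longrightarrow> linmap V W f \<Longrightarrow> f (zer V) = zer W"
  by (metis linmap_sm linmap_in vsp.sm0 vsp.zer_in vsp_def)
lemma linmap_sub: "vspace V \<Longrightarrow> linmap V W f \<Longrightarrow> a \<in> car V \<Longrightarrow> b \<in> car V \<Longrightarrow> f (sub V a b) = sub W (f a) (f b)"
  unfolding sub_def by (simp add: linmap_add linmap_sm vsp.sm_in vsp_def)

lemma (in vsp) neg_unique: "a \<in> car V \<Longrightarrow> b \<in> car V \<Longrightarrow> add V a b = zer V \<Longrightarrow> b = sm V (-1) a"
  using cancel[of a b "sm V (-1) a"] by simp
lemma (in vsp) sub_add_sub': "a \<in> car V \<Longrightarrow> b \<in> car V \<Longrightarrow> c \<in> car V \<Longrightarrow> d \<in> car V \<Longrightarrow>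
   add V (sub V a c) (sub V b d) = sub V (add V a b) (add V c d)"
  by (rule sub_add_sub[symmetric])

locale liea = fixes L :: "('k::field,'a,'m) lie_scheme" assumes la: "lie_alg L"
begin
sublocale vsp L using la unfolding lie_alg_def by unfold_locales simp
lemma br_in[simp]: "a \<in> car L \<Longrightarrow> b \<in> car L \<Longrightarrow> br L a b \<in> car L" using la unfolding lie_alg_def by auto
lemma br_addl: "a \<in> car L \<Longrightarrow> b \<in> car L \<Longrightarrow> c \<in> car L \<Longrightarrow> br L (add L a b) c = add L (br L a c) (br L b c)" using la unfolding lie_alg_def by auto
lemma br_addr: "a \<in> car L \<Longrightarrow> b \<in> car L \<Longrightarrow> c \<in> car L \<Longrightarrow> br L a (add L b c) = add L (br L a b) (br L a c)" using la unfolding lie_alg_def by auto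
lemma br_sml: "a \<in> car L \<Longrightarrow> b \<in> car L \<Longrightarrow> br L (sm L k a) b = sm L k (br L a b)" using la unfolding lie_alg_def by auto
lemma br_smr: "a \<in> car L \<Longrightarrow> b \<in> car L \<Longrightarrow> br L a (sm L k b) = sm L k (br L a b)" using la unfolding lie_alg_def by auto
lemma br_self[simp]: "a \<in> car L \<Longrightarrow> br L a a = zer L" using la unfolding lie_alg_def by auto
lemma br_zer_l[simp]: "a \<in> car L \<Longrightarrow> br L (zer L) a = zer L"
  using br_sml[of "zer L" a 0] by simp
lemma br_zer_r[simp]: "a \<in> car L \<Longrightarrow> br L a (zer L) = zer L"
  using br_smr[of a "zer L" 0] by simp
lemma anticomm: assumes "a \<in> car L" "b \<in> car L" shows "br L b a = sm L (-1) (br L a b)"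
proof -
  have "zer L = br L (add L a b) (add L a b)" using assms by simp
  also have "\<dots> = add L (add L (br L a a) (br L b a)) (add L (br L a b) (br L b b))"
    using assms by (simp del: br_self add: br_addl br_addr)
  also have "\<dots> = add L (br L b a) (br L a b)" using assms by simp
  also have "\<dots> = add L (br L a b) (br L b a)" using assms by (simp add: comm)
  finally have h: "zer L = add L (br L a b) (br L b a)" .
  show ?thesis using neg_unique[of "br L a b" "br L b a"] h assms by simp
qed
lemma expand: assumes "l1 \<in> car L" "v1 \<in> car L" "l2 \<in> car L" "v2 \<in> car L" "br L v1 v2 = zer L"
  shows "br L (add L l1 v1) (add L l2 v2) = add L (br L l1 l2) (sub L (br L l1 v2) (br L l2 v1))"
proof -
  have "br L (add L l1 v1) (add L l2 v2) = add L (add L (br L l1 l2) (br L l1 v2)) (add L (br L v1 l2) (br L v1 v2))"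
    using assms(1-4) by (simp add: br_addl br_addr ac)
  also have "\<dots> = add L (add L (br L l1 l2) (br L l1 v2)) (sm L (-1) (br L l2 v1))"
    using assms by (simp add: anticomm[of l2 v1])
  finally show ?thesis using assms by (simp add: sub_def assoc)
qed
lemma br_sub_l: "a \<in> car L \<Longrightarrow> b \<in> car L \<Longrightarrow> c \<in> car L \<Longrightarrow> br L (sub L a b) c = sub L (br L a c) (br L b c)"
  by (simp add: sub_def br_addl br_sml)
lemma br_sub_r: "a \<in> car L \<Longrightarrow> b \<in> car L \<Longrightarrow> c \<in> car L \<Longrightarrow> br L a (sub L b c) = sub L (br L a b) (br L a c)"
  by (simp add: sub_def br_addr br_smr)
end

locale lpda = fixes A :: "('k::field,'c) lpd" assumes lp: "is_lpd A"
begin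
sublocale liea "pM A" using lp unfolding is_lpd_def by unfold_locales simp
lemma prj_in[simp]: "a \<in> car (pM A) \<Longrightarrow> prj A a \<in> car (pM A)" using lp unfolding is_lpd_def by auto
lemma prj_add: "a \<in> car (pM A) \<Longrightarrow> b \<in> car (pM A) \<Longrightarrow> prj A (add (pM A) a b) = add (pM A) (prj A a) (prj A b)" using lp unfolding is_lpd_def by auto
lemma prj_sm: "a \<in> car (pM A) \<Longrightarrow> prj A (sm (pM A) c a) = sm (pM A) c (prj A a)" using lp unfolding is_lpd_def by auto
lemma prj_idem[simp]: "a \<in> car (pM A) \<Longrightarrow> prj A (prj A a) = prj A a" using lp unfolding is_lpd_def by auto
lemma prj_br: "a \<in> car (pM A) \<Longrightarrow> b \<in> car (pM A) \<Longrightarrow> prj A (br (pM A) a b) = add (pM A) (br (pM A) (prj A a) b) (br (pM A) a (prj A b))" using lp unfolding is_lpd_def by auto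
lemma prj_zer[simp]: "prj A (zer (pM A)) = zer (pM A)" using prj_sm[of "zer (pM A)" 0] by simp
lemma prj_sub: "a \<in> car (pM A) \<Longrightarrow> b \<in> car (pM A) \<Longrightarrow> prj A (sub (pM A) a b) = sub (pM A) (prj A a) (prj A b)"
  by (simp add: sub_def prj_add prj_sm)
lemma kerp_iff: "m \<in> kerp A \<longleftrightarrow> m \<in> car (pM A) \<and> prj A m = zer (pM A)" unfolding kerp_def by simp
lemma imp_iff: "m \<in> imp A \<longleftrightarrow> m \<in> car (pM A) \<and> prj A m = m"
  unfolding imp_def by (auto intro: image_eqI[where x=m]) 
lemma ker_part: "m \<in> car (pM A) \<Longrightarrow> sub (pM A) m (prj A m) \<in> kerp A"
  by (simp add: kerp_iff prj_sub)
lemma im_part: "m \<in> car (pM A) \<Longrightarrow> prj A m \<in> imp A"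
  by (simp add: imp_iff)
lemma decomp: "m \<in> car (pM A) \<Longrightarrow> add (pM A) (sub (pM A) m (prj A m)) (prj A m) = m" by simp
lemma prj_lv: "l \<in> kerp A \<Longrightarrow> v \<in> imp A \<Longrightarrow> prj A (add (pM A) l v) = v"
  by (simp add: kerp_iff imp_iff prj_add)
lemma br_kk: "l1 \<in> kerp A \<Longrightarrow> l2 \<in> kerp A \<Longrightarrow> br (pM A) l1 l2 \<in> kerp A"
  by (simp add: kerp_iff prj_br)
lemma br_ki: "l \<in> kerp A \<Longrightarrow> v \<in> imp A \<Longrightarrow> br (pM A) l v \<in> imp A"
  by (simp add: kerp_iff imp_iff prj_br)
lemma add_kk: "l1 \<in> kerp A \<Longrightarrow> l2 \<in> kerp A \<Longrightarrow> add (pM A) l1 l2 \<in> kerp A"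
  by (simp add: kerp_iff prj_add)
lemma sm_k: "l1 \<in> kerp A \<Longrightarrow> sm (pM A) c l1 \<in> kerp A"
  by (simp add: kerp_iff prj_sm)
lemma add_ii: "l1 \<in> imp A \<Longrightarrow> l2 \<in> imp A \<Longrightarrow> add (pM A) l1 l2 \<in> imp A"
  by (simp add: imp_iff prj_add)
lemma sm_i: "l1 \<in> imp A \<Longrightarrow> sm (pM A) c l1 \<in> imp A"
  by (simp add: imp_iff prj_sm)
lemma sub_kk: "l1 \<in> kerp A \<Longrightarrow> l2 \<in> kerp A \<Longrightarrow> sub (pM A) l1 l2 \<in> kerp A"
  by (simp add: sub_def add_kk sm_k)
lemma sub_ii: "l1 \<in> imp A \<Longrightarrow> l2 \<in> imp A \<Longrightarrow> sub (pM A) l1 l2 \<in> imp A"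
  by (simp add: sub_def add_ii sm_i)
lemma zer_k: "zer (pM A) \<in> kerp A" by (simp add: kerp_iff)
lemma zer_i: "zer (pM A) \<in> imp A" by (simp add: imp_iff)
lemma sub_lv: "l \<in> kerp A \<Longrightarrow> v \<in> imp A \<Longrightarrow> sub (pM A) (add (pM A) l v) v = l"
  by (simp add: kerp_iff imp_iff)
end


lemma br_ii:
  fixes A :: "('k::field_char_0,'c) lpd"
  assumes "is_lpd A" "u \<in> imp A" "v \<in> imp A"
  shows "br (pM A) u v = zer (pM A)"
proof -
  interpret lpda A by unfold_locales (rule assms(1))
  let ?w = "br (pM A) u v"
  have uv: "u \<in> car (pM A)" "v \<in> car (pM A)" "prj A u = u" "prj A v = v" using assms imp_iff by auto
  have w: "?w \<in> car (pM A)" using uv by simp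
  have pw: "prj A ?w = add (pM A) ?w ?w" using uv by (simp add: prj_br)
  have "prj A (prj A ?w) = add (pM A) (prj A ?w) (prj A ?w)" using pw w by (simp add: prj_add)
  hence "prj A ?w = zer (pM A)" using w by (intro double_zer) auto
  hence ww: "add (pM A) ?w ?w = zer (pM A)" using pw by simp
  have "sm (pM A) 2 ?w = add (pM A) ?w ?w" using add_sm[OF w, of 1 1] w by simp
  hence "sm (pM A) (1/2) (sm (pM A) 2 ?w) = zer (pM A)" using ww by simp
  thus ?thesis using w by (simp add: sm_sm)
qed



locale repa = fixes R :: "('k::field,'a,'b) rep" assumes rp: "is_rep R"
begin
sublocale L: liea "rL R" using rp unfolding is_rep_def by unfold_locales simp
sublocale V: vsp "rV R" using rp unfolding is_rep_def by unfold_locales simp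
lemma act_in[simp]: "l \<in> car (rL R) \<Longrightarrow> v \<in> car (rV R) \<Longrightarrow> act R l v \<in> car (rV R)" using rp unfolding is_rep_def by auto
lemma act_addl: "l1 \<in> car (rL R) \<Longrightarrow> l2 \<in> car (rL R) \<Longrightarrow> v \<in> car (rV R) \<Longrightarrow> act R (add (rL R) l1 l2) v = add (rV R) (act R l1 v) (act R l2 v)" using rp unfolding is_rep_def by auto
lemma act_addr: "l \<in> car (rL R) \<Longrightarrow> u \<in> car (rV R) \<Longrightarrow> v \<in> car (rV R) \<Longrightarrow> act R l (add (rV R) u v) = add (rV R) (act R l u) (act R l v)" using rp unfolding is_rep_def by auto
lemma act_sml: "l \<in> car (rL R) \<Longrightarrow> v \<in> car (rV R) \<Longrightarrow> act R (sm (rL R) c l) v = sm (rV R) c (act R l v)" using rp unfolding is_rep_def by auto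
lemma act_smr: "l \<in> car (rL R) \<Longrightarrow> v \<in> car (rV R) \<Longrightarrow> act R l (sm (rV R) c v) = sm (rV R) c (act R l v)" using rp unfolding is_rep_def by auto
lemma act_zer_r[simp]: "l \<in> car (rL R) \<Longrightarrow> act R l (zer (rV R)) = zer (rV R)"
  using act_smr[of l "zer (rV R)" 0] by simp
lemma act_zer_l[simp]: "v \<in> car (rV R) \<Longrightarrow> act R (zer (rL R)) v = zer (rV R)"
  using act_sml[of "zer (rL R)" v 0] by simp
end

lemma Fobj_car: "car (pM (Fobj R)) = car (rL R) \<times> car (rV R)" unfolding Fobj_def by simp
lemma Fobj_zer: "zer (pM (Fobj R)) = (zer (rL R), zer (rV R))" unfolding Fobj_def by simp
lemma Fobj_add: "add (pM (Fobj R)) (l1,v1) (l2,v2) = (add (rL R) l1 l2, add (rV R) v1 v2)" unfolding Fobj_def by simp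
lemma Fobj_sm: "sm (pM (Fobj R)) c (l,v) = (sm (rL R) c l, sm (rV R) c v)" unfolding Fobj_def by simp
lemma Fobj_br: "br (pM (Fobj R)) (l1,v1) (l2,v2) = (br (rL R) l1 l2, sub (rV R) (act R l1 v2) (act R l2 v1))" unfolding Fobj_def by simp
lemma Fobj_prj: "prj (Fobj R) (l,v) = (zer (rL R), v)" unfolding Fobj_def by simp
lemma Fobj_sub: "sub (pM (Fobj R)) (l1,v1) (l2,v2) = (sub (rL R) l1 l2, sub (rV R) v1 v2)" unfolding sub_def Fobj_def by simp
lemmas Fobj_simps = Fobj_car Fobj_zer Fobj_add Fobj_sm Fobj_br Fobj_prj Fobj_sub

lemma ball_prod: "(\<forall>a\<in>A \<times> B. P a) = (\<forall>x\<in>A. \<forall>y\<in>B. P (x,y))" by auto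

lemma Fmor_app: "l \<in> car (rL R) \<Longrightarrow> v \<in> car (rV R) \<Longrightarrow> Fmor R h (l,v) = (fst h l, snd h v)"
  unfolding Fmor_def by simp

lemma Fmor_hom:
  assumes r1: "is_rep W1" and r2: "is_rep W2" and h: "h \<in> rep_hom W1 W2"
  shows "Fmor W1 h \<in> lpd_hom (Fobj W1) (Fobj W2)"
proof -
  interpret A: repa W1 by unfold_locales (rule r1)
  interpret B: repa W2 by unfold_locales (rule r2)
  obtain \<phi> \<psi> where hh: "h = (\<phi>,\<psi>)" by (cases h)
  have lp: "lie_hom (rL W1) (rL W2) \<phi>" and lv: "linmap (rV W1) (rV W2) \<psi>"
    and ac: "\<And>l v. l \<in> car (rL W1) \<Longrightarrow> v \<in> car (rV W1) \<Longrightarrow> act W2 (\<phi> l) (\<psi> v) = \<psi> (act W1 l v)"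
    using h hh unfolding rep_hom_def by auto
  have ll: "linmap (rL W1) (rL W2) \<phi>" using lp unfolding lie_hom_def by simp
  have lb: "\<And>a b. a \<in> car (rL W1) \<Longrightarrow> b \<in> car (rL W1) \<Longrightarrow> \<phi> (br (rL W1) a b) = br (rL W2) (\<phi> a) (\<phi> b)"
    using lp unfolding lie_hom_def by simp
  have z: "\<phi> (zer (rL W1)) = zer (rL W2)" using linmap_zer[OF A.L.vs B.L.vs ll] .
  note [simp] = linmap_in[OF ll] linmap_in[OF lv] linmap_add[OF ll] linmap_add[OF lv] linmap_sm[OF ll] linmap_sm[OF lv]
     lb linmap_sub[OF A.V.vs lv] Fmor_app hh Fobj_simps ball_prod ac z
  show ?thesis
    unfolding lpd_hom_def lie_hom_def linmap_def
    by (auto simp: Fmor_def)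
qed


lemma lpd_Fmor:
  assumes r1: "is_rep W1" and r2: "is_rep W2" and f: "f \<in> lpd_hom (Fobj W1) (Fobj W2)"
  shows "\<exists>h\<in>rep_hom W1 W2. f = Fmor W1 h"
proof -
  interpret A: repa W1 by unfold_locales (rule r1)
  interpret B: repa W2 by unfold_locales (rule r2)
  have lf: "linmap (pM (Fobj W1)) (pM (Fobj W2)) f" using f unfolding lpd_hom_def lie_hom_def by simp
  have fE: "f \<in> car (pM (Fobj W1)) \<rightarrow>\<^sub>E car (pM (Fobj W2))" using lf unfolding linmap_def by simp
  have fin: "\<And>x y. x \<in> car (rL W1) \<Longrightarrow> y \<in> car (rV W1) \<Longrightarrow> fst (f (x,y)) \<in> car (rL W2) \<and> snd (f (x,y)) \<in> car (rV W2)"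
    using linmap_in[OF lf] by (force simp: Fobj_car)
  have fadd: "\<And>x1 y1 x2 y2. x1 \<in> car (rL W1) \<Longrightarrow> y1 \<in> car (rV W1) \<Longrightarrow> x2 \<in> car (rL W1) \<Longrightarrow> y2 \<in> car (rV W1) \<Longrightarrow>
     f (add (rL W1) x1 x2, add (rV W1) y1 y2) = (add (rL W2) (fst (f (x1,y1))) (fst (f (x2,y2))), add (rV W2) (snd (f (x1,y1))) (snd (f (x2,y2))))"
  proof -
    fix x1 y1 x2 y2 assume "x1 \<in> car (rL W1)" "y1 \<in> car (rV W1)" "x2 \<in> car (rL W1)" "y2 \<in> car (rV W1)"
    thus "?thesis x1 y1 x2 y2" using linmap_add[OF lf, of "(x1,y1)" "(x2,y2)"]
      by (simp add: Fobj_simps) (metis Fobj_add prod.collapse)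
  qed
  have fsm: "\<And>x y c. x \<in> car (rL W1) \<Longrightarrow> y \<in> car (rV W1) \<Longrightarrow>
     f (sm (rL W1) c x, sm (rV W1) c y) = (sm (rL W2) c (fst (f (x,y))), sm (rV W2) c (snd (f (x,y))))"
  proof -
    fix x y c assume "x \<in> car (rL W1)" "y \<in> car (rV W1)"
    thus "?thesis x y c" using linmap_sm[OF lf, of "(x,y)" c]
      by (simp add: Fobj_simps) (metis Fobj_sm prod.collapse)
  qed
  have fbr: "\<And>x1 y1 x2 y2. x1 \<in> car (rL W1) \<Longrightarrow> y1 \<in> car (rV W1) \<Longrightarrow> x2 \<in> car (rL W1) \<Longrightarrow> y2 \<in> car (rV W1) \<Longrightarrow>
     f (br (rL W1) x1 x2, sub (rV W1) (act W1 x1 y2) (act W1 x2 y1)) =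
       (br (rL W2) (fst (f (x1,y1))) (fst (f (x2,y2))), sub (rV W2) (act W2 (fst (f (x1,y1))) (snd (f (x2,y2)))) (act W2 (fst (f (x2,y2))) (snd (f (x1,y1)))))"
  proof -
    fix x1 y1 x2 y2 assume "x1 \<in> car (rL W1)" "y1 \<in> car (rV W1)" "x2 \<in> car (rL W1)" "y2 \<in> car (rV W1)"
    thus "?thesis x1 y1 x2 y2" using f unfolding lpd_hom_def lie_hom_def
      by (simp add: Fobj_simps) (metis Fobj_br prod.collapse)
  qed
  have fprj: "\<And>x y. x \<in> car (rL W1) \<Longrightarrow> y \<in> car (rV W1) \<Longrightarrow>
      f (zer (rL W1), y) = (zer (rL W2), snd (f (x,y)))"
  proof -
    fix x y assume "x \<in> car (rL W1)" "y \<in> car (rV W1)"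
    thus "?thesis x y" using f unfolding lpd_hom_def
      by (simp add: Fobj_simps) (metis Fobj_prj prod.collapse)
  qed
  have fz: "f (zer (rL W1), zer (rV W1)) = (zer (rL W2), zer (rV W2))"
  proof -
    obtain a b where ab: "f (zer (rL W1), zer (rV W1)) = (a,b)" by (cases "f (zer (rL W1), zer (rV W1))")
    have "a \<in> car (rL W2)" "b \<in> car (rV W2)" using fin[of "zer (rL W1)" "zer (rV W1)"] ab by auto
    thus ?thesis using fsm[of "zer (rL W1)" "zer (rV W1)" 0] ab by simp
  qed
  define \<phi> where "\<phi> = restrict (\<lambda>l. fst (f (l, zer (rV W1)))) (car (rL W1))"
  define \<psi> where "\<psi> = restrict (\<lambda>v. snd (f (zer (rL W1), v))) (car (rV W1))"
  have f1: "f (l, zer (rV W1)) = (\<phi> l, zer (rV W2))" if l: "l \<in> car (rL W1)" for l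
  proof -
    have "snd (f (l, zer (rV W1))) = zer (rV W2)" using fprj[OF l, of "zer (rV W1)"] fz by simp
    moreover have "\<phi> l = fst (f (l, zer (rV W1)))" using l by (simp add: \<phi>_def)
    ultimately show ?thesis by (metis prod.collapse)
  qed
  have f2: "f (zer (rL W1), v) = (zer (rL W2), \<psi> v)" if v: "v \<in> car (rV W1)" for v
  proof -
    have e: "f (zer (rL W1), v) = (zer (rL W2), snd (f (zer (rL W1), v)))" by (rule fprj) (use v in auto)
    have p: "\<psi> v = snd (f (zer (rL W1), v))" using v by (simp add: \<psi>_def)
    show ?thesis by (subst p) (rule e)
  qed
  have phin: "\<And>l. l \<in> car (rL W1) \<Longrightarrow> \<phi> l \<in> car (rL W2)" using fin f1 by (metis A.V.zer_in fst_conv)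
  have psin: "\<And>v. v \<in> car (rV W1) \<Longrightarrow> \<psi> v \<in> car (rV W2)" using fin f2 by (metis A.L.zer_in snd_conv)
  have f3: "\<And>l v. l \<in> car (rL W1) \<Longrightarrow> v \<in> car (rV W1) \<Longrightarrow> f (l, v) = (\<phi> l, \<psi> v)"
  proof -
    fix l v assume lv: "l \<in> car (rL W1)" "v \<in> car (rV W1)"
    have "f (add (rL W1) l (zer (rL W1)), add (rV W1) (zer (rV W1)) v) = (\<phi> l, \<psi> v)"
      using fadd[of l "zer (rV W1)" "zer (rL W1)" v] lv f1 f2 phin psin by simp
    thus "f (l,v) = (\<phi> l, \<psi> v)" using lv by simp
  qed
  have eq: "f = Fmor W1 (\<phi>,\<psi>)"
  proof
    fix x show "f x = Fmor W1 (\<phi>,\<psi>) x"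
    proof (cases "x \<in> car (pM (Fobj W1))")
      case True then obtain l v where "x = (l,v)" "l \<in> car (rL W1)" "v \<in> car (rV W1)" by (auto simp: Fobj_car)
      thus ?thesis by (simp add: f3 Fmor_app)
    next
      case False
      have "f x = undefined" using fE False by (rule PiE_arb)
      thus ?thesis using False unfolding Fmor_def by (simp add: Fobj_car)
    qed
  qed
  have phom: "lie_hom (rL W1) (rL W2) \<phi>"
    unfolding lie_hom_def linmap_def
  proof (intro conjI ballI allI)
    show "\<phi> \<in> car (rL W1) \<rightarrow>\<^sub>E car (rL W2)" using phin unfolding \<phi>_def by auto
  next
    fix a b assume ab: "a \<in> car (rL W1)" "b \<in> car (rL W1)"
    show "\<phi> (add (rL W1) a b) = add (rL W2) (\<phi> a) (\<phi> b)"
      using fadd[of a "zer (rV W1)" b "zer (rV W1)"] ab by (simp add: f1)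
    show "\<phi> (br (rL W1) a b) = br (rL W2) (\<phi> a) (\<phi> b)"
      using fbr[of a "zer (rV W1)" b "zer (rV W1)"] ab by (simp add: f1 phin)
  next
    fix c a assume a: "a \<in> car (rL W1)"
    show "\<phi> (sm (rL W1) c a) = sm (rL W2) c (\<phi> a)"
      using fsm[of a "zer (rV W1)" c] a by (simp add: f1)
  qed
  have vhom: "linmap (rV W1) (rV W2) \<psi>"
    unfolding linmap_def
  proof (intro conjI ballI allI)
    show "\<psi> \<in> car (rV W1) \<rightarrow>\<^sub>E car (rV W2)" using psin unfolding \<psi>_def by auto
  next
    fix a b assume ab: "a \<in> car (rV W1)" "b \<in> car (rV W1)"
    show "\<psi> (add (rV W1) a b) = add (rV W2) (\<psi> a) (\<psi> b)"
      using fadd[of "zer (rL W1)" a "zer (rL W1)" b] ab by (simp add: f2)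
  next
    fix c a assume a: "a \<in> car (rV W1)"
    show "\<psi> (sm (rV W1) c a) = sm (rV W2) c (\<psi> a)"
      using fsm[of "zer (rL W1)" a c] a by (simp add: f2)
  qed
  have acth: "\<And>l v. l \<in> car (rL W1) \<Longrightarrow> v \<in> car (rV W1) \<Longrightarrow> act W2 (\<phi> l) (\<psi> v) = \<psi> (act W1 l v)"
  proof -
    fix l v assume lv: "l \<in> car (rL W1)" "v \<in> car (rV W1)"
    show "act W2 (\<phi> l) (\<psi> v) = \<psi> (act W1 l v)"
      using fbr[of l "zer (rV W1)" "zer (rL W1)" v] lv by (simp add: f1 f2 phin psin)
  qed
  have "(\<phi>,\<psi>) \<in> rep_hom W1 W2" unfolding rep_hom_def using phom vhom acth by auto
  thus ?thesis using eq by blast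
qed


lemma part1:
  assumes r1: "is_rep W1" and r2: "is_rep W2"
  shows "Fpairs W1 (beta_rep W1 W2 (T1,T2)) = beta_lpd (Fobj W1) (Fobj W2) (T1 \<times> T2)"
proof
  interpret A: repa W1 by unfold_locales (rule r1)
  show "Fpairs W1 (beta_rep W1 W2 (T1,T2)) \<subseteq> beta_lpd (Fobj W1) (Fobj W2) (T1 \<times> T2)"
  proof
    fix x assume "x \<in> Fpairs W1 (beta_rep W1 W2 (T1,T2))"
    then obtain h1 h2 where x: "x = (Fmor W1 h1, Fmor W1 h2)" and hb: "(h1,h2) \<in> beta_rep W1 W2 (T1,T2)"
      unfolding Fpairs_def by auto
    have h: "h1 \<in> rep_hom W1 W2" "h2 \<in> rep_hom W1 W2" using hb unfolding beta_rep_def by auto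
    have "\<forall>a\<in>car (pM (Fobj W1)). sub (pM (Fobj W2)) (Fmor W1 h1 a) (Fmor W1 h2 a) \<in> T1 \<times> T2"
      using hb unfolding beta_rep_def by (auto simp: Fobj_car Fmor_app Fobj_sub)
    thus "x \<in> beta_lpd (Fobj W1) (Fobj W2) (T1 \<times> T2)"
      unfolding x beta_lpd_def using Fmor_hom[OF r1 r2 h(1)] Fmor_hom[OF r1 r2 h(2)] by auto
  qed
next
  interpret A: repa W1 by unfold_locales (rule r1)
  show "beta_lpd (Fobj W1) (Fobj W2) (T1 \<times> T2) \<subseteq> Fpairs W1 (beta_rep W1 W2 (T1,T2))"
  proof
    fix x assume "x \<in> beta_lpd (Fobj W1) (Fobj W2) (T1 \<times> T2)"
    then obtain f g where x: "x = (f,g)" and f: "f \<in> lpd_hom (Fobj W1) (Fobj W2)" and g: "g \<in> lpd_hom (Fobj W1) (Fobj W2)"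
      and d: "\<forall>a\<in>car (pM (Fobj W1)). sub (pM (Fobj W2)) (f a) (g a) \<in> T1 \<times> T2"
      unfolding beta_lpd_def by auto
    obtain h1 where h1: "h1 \<in> rep_hom W1 W2" "f = Fmor W1 h1" using lpd_Fmor[OF r1 r2 f] by blast
    obtain h2 where h2: "h2 \<in> rep_hom W1 W2" "g = Fmor W1 h2" using lpd_Fmor[OF r1 r2 g] by blast
    have d': "\<And>l v. l \<in> car (rL W1) \<Longrightarrow> v \<in> car (rV W1) \<Longrightarrow>
        sub (rL W2) (fst h1 l) (fst h2 l) \<in> T1 \<and> sub (rV W2) (snd h1 v) (snd h2 v) \<in> T2"
      using d h1(2) h2(2) by (force simp: Fobj_car Fmor_app Fobj_sub)
    have "(h1,h2) \<in> beta_rep W1 W2 (T1,T2)"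
      unfolding beta_rep_def using h1(1) h2(1) d'[OF _ A.V.zer_in] d'[OF A.L.zer_in] by auto
    thus "x \<in> Fpairs W1 (beta_rep W1 W2 (T1,T2))" unfolding Fpairs_def x h1(2) h2(2) by force
  qed
qed


lemma Finv_simps[simp]:
  "car (rL (Finv A)) = kerp A" "zer (rL (Finv A)) = zer (pM A)" "add (rL (Finv A)) = add (pM A)"
  "sm (rL (Finv A)) = sm (pM A)" "br (rL (Finv A)) = br (pM A)"
  "car (rV (Finv A)) = imp A" "zer (rV (Finv A)) = zer (pM A)" "add (rV (Finv A)) = add (pM A)"
  "sm (rV (Finv A)) = sm (pM A)" "act (Finv A) = br (pM A)"
  unfolding Finv_def by simp_all

lemma Finv_sub[simp]: "sub (rL (Finv A)) = sub (pM A)" "sub (rV (Finv A)) = sub (pM A)"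
  unfolding sub_def[abs_def] by simp_all

lemma Finv_mor_hom:
  assumes a1: "is_lpd A1" and a2: "is_lpd A2" and f: "f \<in> lpd_hom A1 A2"
  shows "Finv_mor A1 A2 f \<in> rep_hom (Finv A1) (Finv A2)"
    and "\<And>l. l \<in> kerp A1 \<Longrightarrow> fst (Finv_mor A1 A2 f) l = f l"
    and "\<And>v. v \<in> imp A1 \<Longrightarrow> snd (Finv_mor A1 A2 f) v = f v"
proof -
  interpret A: lpda A1 by unfold_locales (rule a1)
  interpret B: lpda A2 by unfold_locales (rule a2)
  have lf: "linmap (pM A1) (pM A2) f" and fb: "\<And>a b. a \<in> car (pM A1) \<Longrightarrow> b \<in> car (pM A1) \<Longrightarrow> f (br (pM A1) a b) = br (pM A2) (f a) (f b)"
    and fp: "\<And>a. a \<in> car (pM A1) \<Longrightarrow> f (prj A1 a) = prj A2 (f a)"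
    using f unfolding lpd_hom_def lie_hom_def by auto
  note fin = linmap_in[OF lf] and fadd = linmap_add[OF lf] and fsm = linmap_sm[OF lf]
  have fz: "f (zer (pM A1)) = zer (pM A2)" using linmap_zer[OF A.vs B.vs lf] .
  have fk: "f l \<in> kerp A2" if "l \<in> kerp A1" for l
    using that fp[of l] fz fin by (simp add: A.kerp_iff B.kerp_iff)
  have fi: "f v \<in> imp A2" if "v \<in> imp A1" for v
    using that fp[of v] fin by (simp add: A.imp_iff B.imp_iff)
  have e1: "fst (Finv_mor A1 A2 f) l = f l" if "l \<in> kerp A1" for l
    using fk[OF that] that unfolding Finv_mor_def by (simp add: B.kerp_iff)
  have e2: "snd (Finv_mor A1 A2 f) v = f v" if "v \<in> imp A1" for v
    using fi[OF that] that unfolding Finv_mor_def by (simp add: B.imp_iff)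
  show "\<And>l. l \<in> kerp A1 \<Longrightarrow> fst (Finv_mor A1 A2 f) l = f l" by (rule e1)
  show "\<And>v. v \<in> imp A1 \<Longrightarrow> snd (Finv_mor A1 A2 f) v = f v" by (rule e2)
  have kc: "\<And>l. l \<in> kerp A1 \<Longrightarrow> l \<in> car (pM A1)" by (simp add: A.kerp_iff)
  have ic: "\<And>l. l \<in> imp A1 \<Longrightarrow> l \<in> car (pM A1)" by (simp add: A.imp_iff)
  have E1: "fst (Finv_mor A1 A2 f) \<in> kerp A1 \<rightarrow>\<^sub>E kerp A2" using e1 fk unfolding Finv_mor_def by auto
  have E2: "snd (Finv_mor A1 A2 f) \<in> imp A1 \<rightarrow>\<^sub>E imp A2" using e2 fi unfolding Finv_mor_def by auto
  obtain \<phi> \<psi> where fm: "Finv_mor A1 A2 f = (\<phi>,\<psi>)" by (cases "Finv_mor A1 A2 f")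
  have e1': "\<And>l. l \<in> kerp A1 \<Longrightarrow> \<phi> l = f l" using e1 fm by (metis fst_conv)
  have e2': "\<And>l. l \<in> imp A1 \<Longrightarrow> \<psi> l = f l" using e2 fm by (metis snd_conv)
  have "(\<phi>,\<psi>) \<in> rep_hom (Finv A1) (Finv A2)"
    unfolding rep_hom_def lie_hom_def linmap_def
    using E1 E2 fm
    by (auto simp: e1' e2' A.add_kk A.sm_k A.br_kk A.add_ii A.sm_i A.br_ki kc ic fadd fsm fb)
  thus "Finv_mor A1 A2 f \<in> rep_hom (Finv A1) (Finv A2)" using fm by simp
qed


lemma lift:
  fixes A1 :: "('k::field_char_0,'c) lpd" and A2 :: "('k,'d) lpd"
  assumes a1: "is_lpd A1" and a2: "is_lpd A2" and h: "(\<phi>,\<psi>) \<in> rep_hom (Finv A1) (Finv A2)"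
  shows "\<exists>f \<in> lpd_hom A1 A2. Finv_mor A1 A2 f = (\<phi>,\<psi>) \<and>
     (\<forall>l\<in>kerp A1. \<forall>v\<in>imp A1. f (add (pM A1) l v) = add (pM A2) (\<phi> l) (\<psi> v))"
proof -
  interpret A: lpda A1 by unfold_locales (rule a1)
  interpret B: lpda A2 by unfold_locales (rule a2)
  have \<phi>E: "\<phi> \<in> kerp A1 \<rightarrow>\<^sub>E kerp A2" and \<psi>E: "\<psi> \<in> imp A1 \<rightarrow>\<^sub>E imp A2"
    using h unfolding rep_hom_def lie_hom_def linmap_def by auto
  have \<phi>k: "\<And>l. l \<in> kerp A1 \<Longrightarrow> \<phi> l \<in> kerp A2" using \<phi>E by auto
  have \<psi>i: "\<And>l. l \<in> imp A1 \<Longrightarrow> \<psi> l \<in> imp A2" using \<psi>E by auto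
  have \<phi>add: "\<And>a b. a \<in> kerp A1 \<Longrightarrow> b \<in> kerp A1 \<Longrightarrow> \<phi> (add (pM A1) a b) = add (pM A2) (\<phi> a) (\<phi> b)"
    and \<phi>sm: "\<And>a c. a \<in> kerp A1 \<Longrightarrow> \<phi> (sm (pM A1) c a) = sm (pM A2) c (\<phi> a)"
    and \<phi>br: "\<And>a b. a \<in> kerp A1 \<Longrightarrow> b \<in> kerp A1 \<Longrightarrow> \<phi> (br (pM A1) a b) = br (pM A2) (\<phi> a) (\<phi> b)"
    and \<psi>add: "\<And>a b. a \<in> imp A1 \<Longrightarrow> b \<in> imp A1 \<Longrightarrow> \<psi> (add (pM A1) a b) = add (pM A2) (\<psi> a) (\<psi> b)"
    and \<psi>sm: "\<And>a c. a \<in> imp A1 \<Longrightarrow> \<psi> (sm (pM A1) c a) = sm (pM A2) c (\<psi> a)"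
    and act: "\<And>l v. l \<in> kerp A1 \<Longrightarrow> v \<in> imp A1 \<Longrightarrow> \<psi> (br (pM A1) l v) = br (pM A2) (\<phi> l) (\<psi> v)"
    using h unfolding rep_hom_def lie_hom_def linmap_def by auto
  have k1: "\<And>l. l \<in> kerp A1 \<Longrightarrow> l \<in> car (pM A1)" by (simp add: A.kerp_iff)
  have i1: "\<And>l. l \<in> imp A1 \<Longrightarrow> l \<in> car (pM A1)" by (simp add: A.imp_iff)
  have k2: "\<And>l. l \<in> kerp A2 \<Longrightarrow> l \<in> car (pM A2)" by (simp add: B.kerp_iff)
  have i2: "\<And>l. l \<in> imp A2 \<Longrightarrow> l \<in> car (pM A2)" by (simp add: B.imp_iff)
  have \<phi>c: "\<And>l. l \<in> kerp A1 \<Longrightarrow> \<phi> l \<in> car (pM A2)" using \<phi>k k2 by blast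
  have \<psi>c: "\<And>l. l \<in> imp A1 \<Longrightarrow> \<psi> l \<in> car (pM A2)" using \<psi>i i2 by blast
  have \<phi>z: "\<phi> (zer (pM A1)) = zer (pM A2)"
    using \<phi>sm[OF A.zer_k, of 0] \<phi>c[OF A.zer_k] by simp
  have \<psi>z: "\<psi> (zer (pM A1)) = zer (pM A2)"
    using \<psi>sm[OF A.zer_i, of 0] \<psi>c[OF A.zer_i] by simp
  have \<psi>sub: "\<And>a b. a \<in> imp A1 \<Longrightarrow> b \<in> imp A1 \<Longrightarrow> \<psi> (sub (pM A1) a b) = sub (pM A2) (\<psi> a) (\<psi> b)"
    unfolding sub_def by (simp add: \<psi>add \<psi>sm A.sm_i)
  define f where "f = restrict (\<lambda>m. add (pM A2) (\<phi> (sub (pM A1) m (prj A1 m))) (\<psi> (prj A1 m))) (car (pM A1))"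
  have fl: "f (add (pM A1) l v) = add (pM A2) (\<phi> l) (\<psi> v)" if "l \<in> kerp A1" "v \<in> imp A1" for l v
    using that unfolding f_def by (simp add: k1 i1 A.prj_lv A.sub_lv)
  have dec: "\<exists>l v. l \<in> kerp A1 \<and> v \<in> imp A1 \<and> a = add (pM A1) l v" if "a \<in> car (pM A1)" for a
    using that A.ker_part A.im_part A.decomp by metis
  have fk: "f l = \<phi> l" if "l \<in> kerp A1" for l
    using fl[OF that A.zer_i] that by (simp add: k1 \<psi>z \<phi>c)
  have fi: "f v = \<psi> v" if "v \<in> imp A1" for v
    using fl[OF A.zer_k that] that by (simp add: i1 \<phi>z \<psi>c)
  have fhom: "f \<in> lpd_hom A1 A2"
    unfolding lpd_hom_def lie_hom_def linmap_def
  proof (intro CollectI conjI ballI allI)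
    show "f \<in> car (pM A1) \<rightarrow>\<^sub>E car (pM A2)" unfolding f_def
      by (auto intro!: B.add_in \<phi>c \<psi>c A.ker_part A.im_part)
  next
    fix a b assume a: "a \<in> car (pM A1)" and b: "b \<in> car (pM A1)"
    obtain l1 v1 where d1: "l1 \<in> kerp A1" "v1 \<in> imp A1" "a = add (pM A1) l1 v1" using dec[OF a] by blast
    obtain l2 v2 where d2: "l2 \<in> kerp A1" "v2 \<in> imp A1" "b = add (pM A1) l2 v2" using dec[OF b] by blast
    have "add (pM A1) a b = add (pM A1) (add (pM A1) l1 l2) (add (pM A1) v1 v2)"
      using d1 d2 k1 i1 by (simp add: A.ac)
    hence "f (add (pM A1) a b) = add (pM A2) (\<phi> (add (pM A1) l1 l2)) (\<psi> (add (pM A1) v1 v2))"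
      using fl d1 d2 A.add_kk A.add_ii by simp
    also have "\<dots> = add (pM A2) (f a) (f b)"
      using d1 d2 fl \<phi>add \<psi>add \<phi>c \<psi>c by (simp add: B.ac)
    finally show "f (add (pM A1) a b) = add (pM A2) (f a) (f b)" .
    have "br (pM A1) a b = add (pM A1) (br (pM A1) l1 l2) (sub (pM A1) (br (pM A1) l1 v2) (br (pM A1) l2 v1))"
      using d1 d2 k1 i1 A.expand br_ii[OF a1 d1(2) d2(2)] by simp
    hence "f (br (pM A1) a b) = add (pM A2) (\<phi> (br (pM A1) l1 l2)) (\<psi> (sub (pM A1) (br (pM A1) l1 v2) (br (pM A1) l2 v1)))"
      using fl d1 d2 A.br_kk A.br_ki A.sub_ii by simp
    also have "\<dots> = add (pM A2) (br (pM A2) (\<phi> l1) (\<phi> l2)) (sub (pM A2) (br (pM A2) (\<phi> l1) (\<psi> v2)) (br (pM A2) (\<phi> l2) (\<psi> v1)))"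
      using d1 d2 by (simp add: \<phi>br \<psi>sub A.br_ki act)
    also have "\<dots> = br (pM A2) (add (pM A2) (\<phi> l1) (\<psi> v1)) (add (pM A2) (\<phi> l2) (\<psi> v2))"
      using d1 d2 \<phi>c \<psi>c B.expand br_ii[OF a2 \<psi>i[OF d1(2)] \<psi>i[OF d2(2)]] by simp
    also have "\<dots> = br (pM A2) (f a) (f b)" using d1 d2 fl by simp
    finally show "f (br (pM A1) a b) = br (pM A2) (f a) (f b)" .
  next
    fix c a assume a: "a \<in> car (pM A1)"
    obtain l1 v1 where d1: "l1 \<in> kerp A1" "v1 \<in> imp A1" "a = add (pM A1) l1 v1" using dec[OF a] by blast
    have "sm (pM A1) c a = add (pM A1) (sm (pM A1) c l1) (sm (pM A1) c v1)"
      using d1 k1 i1 by (simp add: A.sm_add)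
    hence "f (sm (pM A1) c a) = add (pM A2) (\<phi> (sm (pM A1) c l1)) (\<psi> (sm (pM A1) c v1))"
      using fl d1 A.sm_k A.sm_i by simp
    also have "\<dots> = sm (pM A2) c (f a)"
      using d1 fl \<phi>sm \<psi>sm \<phi>c \<psi>c by (simp add: B.sm_add)
    finally show "f (sm (pM A1) c a) = sm (pM A2) c (f a)" .
  next
    fix a assume a: "a \<in> car (pM A1)"
    obtain l1 v1 where d1: "l1 \<in> kerp A1" "v1 \<in> imp A1" "a = add (pM A1) l1 v1" using dec[OF a] by blast
    have "f (prj A1 a) = \<psi> v1" using d1 fi A.prj_lv by simp
    also have "\<dots> = prj A2 (f a)" using d1 fl B.prj_lv \<phi>k \<psi>i by simp
    finally show "f (prj A1 a) = prj A2 (f a)" .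
  qed
  have m1: "fst (Finv_mor A1 A2 f) = \<phi>"
  proof
    fix m show "fst (Finv_mor A1 A2 f) m = \<phi> m"
    proof (cases "m \<in> kerp A1")
      case True
      have "\<phi> m \<in> kerp A2" using \<phi>k True by blast
      hence c: "\<phi> m \<in> car (pM A2)" "prj A2 (\<phi> m) = zer (pM A2)" by (simp_all add: B.kerp_iff)
      have "fst (Finv_mor A1 A2 f) m = sub (pM A2) (f m) (prj A2 (f m))" using True by (simp add: Finv_mor_def)
      also have "\<dots> = \<phi> m" using c by (simp add: fk[OF True])
      finally show ?thesis .
    next
      case False
      have "fst (Finv_mor A1 A2 f) m = undefined" using False by (simp add: Finv_mor_def)
      moreover have "\<phi> m = undefined" using \<phi>E False by (rule PiE_arb)
      ultimately show ?thesis by simp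
    qed
  qed
  have m2: "snd (Finv_mor A1 A2 f) = \<psi>"
  proof
    fix m show "snd (Finv_mor A1 A2 f) m = \<psi> m"
    proof (cases "m \<in> imp A1")
      case True
      have "\<psi> m \<in> imp A2" using \<psi>i True by blast
      hence c: "\<psi> m \<in> car (pM A2)" "prj A2 (\<psi> m) = \<psi> m" by (simp_all add: B.imp_iff)
      have "snd (Finv_mor A1 A2 f) m = prj A2 (f m)" using True by (simp add: Finv_mor_def)
      also have "\<dots> = \<psi> m" using c by (simp add: fi[OF True])
      finally show ?thesis .
    next
      case False
      have "snd (Finv_mor A1 A2 f) m = undefined" using False by (simp add: Finv_mor_def)
      moreover have "\<psi> m = undefined" using \<psi>E False by (rule PiE_arb)
      ultimately show ?thesis by simp
    qed
  qed
  show ?thesis using fhom m1 m2 fl by (intro bexI[of _ f]) (auto simp: prod_eq_iff)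
qed


lemma part2:
  fixes A1 :: "('k::field_char_0,'c) lpd" and A2 :: "('k,'d) lpd"
  assumes a1: "is_lpd A1" and a2: "is_lpd A2" and Tadd: "\<forall>a\<in>T. \<forall>b\<in>T. add (pM A2) a b \<in> T"
  shows "Finv_pairs A1 A2 (beta_lpd A1 A2 T) = beta_rep (Finv A1) (Finv A2) (T \<inter> kerp A2, T \<inter> imp A2)"
proof
  interpret A: lpda A1 by unfold_locales (rule a1)
  interpret B: lpda A2 by unfold_locales (rule a2)
  show "Finv_pairs A1 A2 (beta_lpd A1 A2 T) \<subseteq> beta_rep (Finv A1) (Finv A2) (T \<inter> kerp A2, T \<inter> imp A2)"
  proof
    fix x assume "x \<in> Finv_pairs A1 A2 (beta_lpd A1 A2 T)"
    then obtain f g where x: "x = (Finv_mor A1 A2 f, Finv_mor A1 A2 g)" and fg: "(f,g) \<in> beta_lpd A1 A2 T"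
      unfolding Finv_pairs_def by auto
    have f: "f \<in> lpd_hom A1 A2" and g: "g \<in> lpd_hom A1 A2"
      and d: "\<And>a. a \<in> car (pM A1) \<Longrightarrow> sub (pM A2) (f a) (g a) \<in> T" using fg unfolding beta_lpd_def by auto
    note hf = Finv_mor_hom[OF a1 a2 f] and hg = Finv_mor_hom[OF a1 a2 g]
    have lf1: "linmap (rL (Finv A1)) (rL (Finv A2)) (fst (Finv_mor A1 A2 f))"
      and lg1: "linmap (rL (Finv A1)) (rL (Finv A2)) (fst (Finv_mor A1 A2 g))"
      and lf2: "linmap (rV (Finv A1)) (rV (Finv A2)) (snd (Finv_mor A1 A2 f))"
      and lg2: "linmap (rV (Finv A1)) (rV (Finv A2)) (snd (Finv_mor A1 A2 g))"
      using hf(1) hg(1) unfolding rep_hom_def lie_hom_def by auto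
    have k1: "\<And>l. l \<in> kerp A1 \<Longrightarrow> l \<in> car (pM A1)" by (simp add: A.kerp_iff)
    have i1: "\<And>l. l \<in> imp A1 \<Longrightarrow> l \<in> car (pM A1)" by (simp add: A.imp_iff)
    have c1: "sub (pM A2) (fst (Finv_mor A1 A2 f) l) (fst (Finv_mor A1 A2 g) l) \<in> T \<inter> kerp A2" if l: "l \<in> kerp A1" for l
      using d[OF k1[OF l]] hf(2)[OF l] hg(2)[OF l] B.sub_kk linmap_in[OF lf1, of l] linmap_in[OF lg1, of l] l by simp
    have c2: "sub (pM A2) (snd (Finv_mor A1 A2 f) l) (snd (Finv_mor A1 A2 g) l) \<in> T \<inter> imp A2" if l: "l \<in> imp A1" for l
      using d[OF i1[OF l]] hf(3)[OF l] hg(3)[OF l] B.sub_ii linmap_in[OF lf2, of l] linmap_in[OF lg2, of l] l by simp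
    show "x \<in> beta_rep (Finv A1) (Finv A2) (T \<inter> kerp A2, T \<inter> imp A2)"
      unfolding x beta_rep_def using hf(1) hg(1) c1 c2 by simp
  qed
next
  interpret A: lpda A1 by unfold_locales (rule a1)
  interpret B: lpda A2 by unfold_locales (rule a2)
  show "beta_rep (Finv A1) (Finv A2) (T \<inter> kerp A2, T \<inter> imp A2) \<subseteq> Finv_pairs A1 A2 (beta_lpd A1 A2 T)"
  proof
    fix x assume x: "x \<in> beta_rep (Finv A1) (Finv A2) (T \<inter> kerp A2, T \<inter> imp A2)"
    then obtain \<phi>1 \<psi>1 \<phi>2 \<psi>2 where xx: "x = ((\<phi>1,\<psi>1),(\<phi>2,\<psi>2))" by (metis prod.collapse)
    have h1: "(\<phi>1,\<psi>1) \<in> rep_hom (Finv A1) (Finv A2)" and h2: "(\<phi>2,\<psi>2) \<in> rep_hom (Finv A1) (Finv A2)"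
      and d1: "\<And>l. l \<in> kerp A1 \<Longrightarrow> sub (pM A2) (\<phi>1 l) (\<phi>2 l) \<in> T"
      and d2: "\<And>l. l \<in> imp A1 \<Longrightarrow> sub (pM A2) (\<psi>1 l) (\<psi>2 l) \<in> T"
      using x unfolding xx beta_rep_def by auto
    have k: "\<And>l. l \<in> kerp A1 \<Longrightarrow> \<phi>1 l \<in> car (pM A2) \<and> \<phi>2 l \<in> car (pM A2)"
      and i: "\<And>l. l \<in> imp A1 \<Longrightarrow> \<psi>1 l \<in> car (pM A2) \<and> \<psi>2 l \<in> car (pM A2)"
      using h1 h2 unfolding rep_hom_def lie_hom_def linmap_def by (auto simp: B.kerp_iff B.imp_iff)
    obtain f where f: "f \<in> lpd_hom A1 A2" "Finv_mor A1 A2 f = (\<phi>1,\<psi>1)"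
      and fl: "\<forall>l\<in>kerp A1. \<forall>v\<in>imp A1. f (add (pM A1) l v) = add (pM A2) (\<phi>1 l) (\<psi>1 v)"
      using lift[OF a1 a2 h1] by blast
    obtain g where g: "g \<in> lpd_hom A1 A2" "Finv_mor A1 A2 g = (\<phi>2,\<psi>2)"
      and gl: "\<forall>l\<in>kerp A1. \<forall>v\<in>imp A1. g (add (pM A1) l v) = add (pM A2) (\<phi>2 l) (\<psi>2 v)"
      using lift[OF a1 a2 h2] by blast
    have "sub (pM A2) (f a) (g a) \<in> T" if a: "a \<in> car (pM A1)" for a
    proof -
      obtain l v where lv: "l \<in> kerp A1" "v \<in> imp A1" "a = add (pM A1) l v"
        using a A.ker_part A.im_part A.decomp by metis
      have "sub (pM A2) (f a) (g a) = add (pM A2) (sub (pM A2) (\<phi>1 l) (\<phi>2 l)) (sub (pM A2) (\<psi>1 v) (\<psi>2 v))"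
        using lv fl gl k[OF lv(1)] i[OF lv(2)] by (simp add: B.sub_add_sub)
      thus ?thesis using Tadd d1[OF lv(1)] d2[OF lv(2)] by simp
    qed
    hence "(f,g) \<in> beta_lpd A1 A2 T" unfolding beta_lpd_def using f g by auto
    thus "x \<in> Finv_pairs A1 A2 (beta_lpd A1 A2 T)" unfolding Finv_pairs_def xx using f(2) g(2)
      by (auto intro!: image_eqI[where x="(f,g)"])
  qed
qed


lemma Cl_add:
  assumes N: "is_lpd N" and T: "T \<in> Cl_lpd N (Ffree M)"
  shows "\<forall>a\<in>T. \<forall>b\<in>T. add (pM (Ffree M)) a b \<in> T"
proof (intro ballI)
  fix a b assume a: "a \<in> T" and b: "b \<in> T"
  interpret NN: lpda N by unfold_locales (rule N)
  interpret FF: lpda "Ffree M" by unfold_locales (rule lpd_Ffree)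
  have TT: "Tpp_lpd (Ffree M) N T = T" and Tc: "T \<subseteq> car (pM (Ffree M))" using T unfolding Cl_lpd_def by auto
  have ac: "a \<in> car (pM (Ffree M))" "b \<in> car (pM (Ffree M))" using a b Tc by auto
  have "\<forall>h\<in>Tp_lpd (Ffree M) N T. h (add (pM (Ffree M)) a b) = zer (pM N)"
  proof
    fix h assume h: "h \<in> Tp_lpd (Ffree M) N T"
    hence lh: "linmap (pM (Ffree M)) (pM N) h" and z: "h a = zer (pM N)" "h b = zer (pM N)"
      using a b unfolding Tp_lpd_def lpd_hom_def lie_hom_def by auto
    show "h (add (pM (Ffree M)) a b) = zer (pM N)" using linmap_add[OF lh ac] z by simp
  qed
  hence "add (pM (Ffree M)) a b \<in> Tpp_lpd (Ffree M) N T" unfolding Tpp_lpd_def using ac by simp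
  thus "add (pM (Ffree M)) a b \<in> T" using TT by simp
qed

theorem proposition8:
  fixes X1 Y1 X2 Y2 M1 M2 :: "nat set"
    and H :: "('k::field_char_0, 'a, 'b) rep"
    and T1 :: "('k, nat) lt set set" and T2 :: "('k, nat, nat) mt set set"
    and N :: "('k, 'c) lpd"
    and T :: "('k, nat) pt set set"
  assumes "infinite (UNIV :: 'k set)"
  shows "(finite X1 \<and> finite Y1 \<and> card X1 = card Y1
           \<and> finite X2 \<and> finite Y2 \<and> card X2 = card Y2
           \<and> is_rep H \<and> (T1, T2) \<in> Cl_rep H (Wfree X2 Y2)
         \<longrightarrow> Fpairs (Wfree X1 Y1) (beta_rep (Wfree X1 Y1) (Wfree X2 Y2) (T1, T2))
             = beta_lpd (Fobj (Wfree X1 Y1)) (Fobj (Wfree X2 Y2)) (T1 \<times> T2))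
       \<and> (finite M1 \<and> finite M2 \<and> is_lpd N \<and> T \<in> Cl_lpd N (Ffree M2)
         \<longrightarrow> Finv_pairs (Ffree M1) (Ffree M2) (beta_lpd (Ffree M1) (Ffree M2) T)
             = beta_rep (Finv (Ffree M1)) (Finv (Ffree M2))
                 (T \<inter> kerp (Ffree M2), T \<inter> imp (Ffree M2)))"
proof (intro conjI impI)
  show "Fpairs (Wfree X1 Y1) (beta_rep (Wfree X1 Y1) (Wfree X2 Y2) (T1, T2))
             = beta_lpd (Fobj (Wfree X1 Y1)) (Fobj (Wfree X2 Y2)) (T1 \<times> T2)"
    by (rule part1[OF rep_Wfree rep_Wfree])
next
  assume h: "finite M1 \<and> finite M2 \<and> is_lpd N \<and> T \<in> Cl_lpd N (Ffree M2)"
  show "Finv_pairs (Ffree M1) (Ffree M2) (beta_lpd (Ffree M1) (Ffree M2) T)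
             = beta_rep (Finv (Ffree M1)) (Finv (Ffree M2))
                 (T \<inter> kerp (Ffree M2), T \<inter> imp (Ffree M2))"
    using h by (intro part2[OF lpd_Ffree lpd_Ffree] Cl_add) auto
qed

end
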